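(* Let $2\le n\le\infty$, $r\ge0$ and let $A$ be an $n$-multicomplex. Then $\iota_A=\iota\otimes1_A\colon A\cong R^{0,0}\otimes A\to P_r(A)=\Lambda_r\otimes A$ is an $r$-homotopy equivalence (hence an $E_r$-quasi-isomorphism), and $\pi_A=\pi\otimes1_A\colon P_r(A)\to A\oplus A$ is a fibration in the $r$-model structure, i.e. $E_i(\pi_A)$ is bidegree-wise surjective for all $0\le i\le r$. The composite $\pi_A\iota_A$ is the diagonal $A\to A\oplus A$, so $P_r(A)$ is a (functorial) path object for $A$ in the $r$-model structure.
   Context: $R$ is a commutative unital ring. For $1\le n\le\infty$, an $n$-multicomplex is a $\mathbb Z\times\mathbb Z$-bigraded $R$-module $A$ with $R$-linear maps $d_i$ ($i\ge0$) of bidegree $(-i,1-i)$ such that $\sum_{i+j=l}(-1)^id_id_j=0$ for all $l\ge0$ and $d_i=0$ for $i\ge n$; morphisms are bidegree $(0,0)$ maps commuting with all $d_i$. Bicomplexes ($2$-multicomplexes) are regarded as $n$-multicomplexes. Tensor product: $(A\otimes B)^{p,q}=\bigoplus A^{p_1,q_1}\otimes_RB^{p_2,q_2}$ ($p_1+p_2=p$, $q_1+q_2=q$), $d_i(a\otimes b)=d_ia\otimes b+(-1)^{\langle(-i,1-i),(a_1,a_2)\rangle}a\otimes d_ib$ for $a$ of bidegree $(a_1,a_2)$, where $\langle(x_1,x_2),(y_1,y_2)\rangle=x_1y_1+x_2y_2$. Spectral sequence: $Z_0^{p,q}(A)=A^{p,q}$; for $r\ge1$, $Z_r^{p,q}(A)$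 is the set of $a_0\in A^{p,q}$ for which there exist $a_j\in A^{p-j,q-j}$ ($1\le j\le r-1$) with $\sum_{i+j=l}(-1)^id_ia_j=0$ for $0\le l\le r-1$. $B_0=0$, $B_1^{p,q}(A)=A^{p,q}\cap\operatorname{im}d_0$, and for $r\ge2$, $B_r^{p,q}(A)$ is the set of $x\in A^{p,q}$ for which there exist $b_i\in A^{p+r-1-i,q+r-2-i}$ ($0\le i\le r-1$) with $x=\sum_{i=0}^{r-1}(-1)^id_ib_{r-1-i}$ and $\sum_{i=0}^l(-1)^id_ib_{l-i}=0$ for $0\le l\le r-2$. $E_r^{p,q}(A)=Z_r^{p,q}(A)/B_r^{p,q}(A)$; $E_r$-quasi-isomorphism means $E_{r+1}(f)$ is an isomorphism. $r$-homotopy: for morphisms $f,g\colon A\to B$, an $r$-homotopy from $f$ to $g$ is a family of maps $h_m\colon A\to B$ ($m\ge0$) of bidegree $(-m+r,-m+r-1)$ with $\sum_{i+j=m}\big((-1)^{i+r}d_ih_j+(-1)^ih_id_j\big)$ equal to $g-f$ if $m=r$ and $0$ otherwise. $f\colon A\to B$ is an $r$-homotopy equivalence if there is $g\colon B\to A$ with $fg$ $r$-homotopic to $1_B$ and $gf$ $r$-homotopic to $1_A$. Path bicomplexes: $\Lambda_0$ has basis $\beta_-,\beta_{0,0}$ in bidegree $(0,0)$ and $\beta_{0,1}$ in bidegree $(0,1)$, with $d_0\beta_-=-\beta_{0,1}$, $d_0\beta_{0,0}=\beta_{0,1}$, other structure maps zero. For $r\ge1$, $\Lambda_r$ has basis $\beta_-$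 (bidegree $(0,0)$), $\beta_{-i,-i}$ and $\beta_{-i-1,-i}$ for $0\le i\le r-1$ ($\beta_{u,v}$ in bidegree $(u,v)$), with nonzero structure maps $d_1\beta_{0,0}=-d_1\beta_-=\beta_{-1,0}$, and $d_0\beta_{-i,-i}=\beta_{-i,1-i}$, $d_1\beta_{-i,-i}=\beta_{-i-1,-i}$ for $1\le i\le r-1$. $\iota\colon R^{0,0}\to\Lambda_r$ sends $1\mapsto\beta_-+\beta_{0,0}$, and $\pi\colon\Lambda_r\to(R\oplus R)^{0,0}$ is $(\partial_-,\partial_+)$ where $\partial_-$, $\partial_+$ are the coordinate projections onto $R\beta_-$ and $R\beta_{0,0}$. $P_r(A)=\Lambda_r\otimes A$. The $r$-model structure on $n$-multicomplexes has weak equivalences the $E_r$-quasi-isomorphisms and fibrations the morphisms $f$ with $E_i(f)$ bidegree-wise surjective for $0\le i\le r$. *)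

theory Defs
  imports Main "HOL-Library.Extended_Nat" "HOL-Library.Function_Algebras" "HOL-Library.Product_Plus"
begin

text \<open>A bigraded R-module is given by its homogeneous components A^{p,q}, each a
submodule-like subset of an ambient abelian group 'a, with a scalar action of the
commutative unital ring 'r. All maps (structure maps, morphisms, homotopies) are given
componentwise, indexed by the bidegree of their source component; A is regarded as the
external direct sum of its components.\<close>

record ('r, 'a) mcx =
  car  :: "int \<Rightarrow> int \<Rightarrow> 'a set"
  smul :: "'r \<Rightarrow> 'a \<Rightarrow> 'a"
  dd   :: "nat \<Rightarrow> int \<Rightarrow> int \<Rightarrow> 'a \<Rightarrow> 'a"

definition sgnf :: "nat \<Rightarrow> 'a::ab_group_add \<Rightarrow> 'a" where
  "sgnf i x = (if even i then x else - x)"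

definition isgn :: "int \<Rightarrow> 'a::ab_group_add \<Rightarrow> 'a" where
  "isgn k x = (if even k then x else - x)"

definition rmodule_on :: "('r::comm_ring_1 \<Rightarrow> 'a::ab_group_add \<Rightarrow> 'a) \<Rightarrow> 'a set \<Rightarrow> bool" where
  "rmodule_on s S \<longleftrightarrow> 0 \<in> S \<and> (\<forall>x\<in>S. \<forall>y\<in>S. x + y \<in> S) \<and> (\<forall>x\<in>S. - x \<in> S)
     \<and> (\<forall>c. \<forall>x\<in>S. s c x \<in> S)
     \<and> (\<forall>a b. \<forall>x\<in>S. s (a * b) x = s a (s b x)) \<and> (\<forall>x\<in>S. s 1 x = x)
     \<and> (\<forall>a b. \<forall>x\<in>S. s (a + b) x = s a x + s b x)
     \<and> (\<forall>a. \<forall>x\<in>S. \<forall>y\<in>S. s a (x + y) = s a x + s a y)"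

definition lin_on :: "('r \<Rightarrow> 'a::ab_group_add \<Rightarrow> 'a) \<Rightarrow> ('r \<Rightarrow> 'b::ab_group_add \<Rightarrow> 'b)
    \<Rightarrow> 'a set \<Rightarrow> ('a \<Rightarrow> 'b) \<Rightarrow> bool" where
  "lin_on sa sb S f \<longleftrightarrow> (\<forall>x\<in>S. \<forall>y\<in>S. f (x + y) = f x + f y) \<and> (\<forall>c. \<forall>x\<in>S. f (sa c x) = sb c (f x))"

definition multicomplex :: "enat \<Rightarrow> ('r::comm_ring_1, 'a::ab_group_add) mcx \<Rightarrow> bool" where
  "multicomplex n A \<longleftrightarrow>
     (\<forall>p q. rmodule_on (smul A) (car A p q)) \<and>
     (\<forall>i p q. \<forall>x\<in>car A p q. dd A i p q x \<in> car A (p - int i) (q + 1 - int i)) \<and>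
     (\<forall>i p q. lin_on (smul A) (smul A) (car A p q) (dd A i p q)) \<and>
     (\<forall>i p q. n \<le> enat i \<longrightarrow> (\<forall>x\<in>car A p q. dd A i p q x = 0)) \<and>
     (\<forall>l p q. \<forall>x\<in>car A p q.
        (\<Sum>j\<le>l. sgnf (l - j) (dd A (l - j) (p - int j) (q + 1 - int j) (dd A j p q x))) = 0)"

definition mc_morphism :: "('r, 'a::ab_group_add) mcx \<Rightarrow> ('r, 'b::ab_group_add) mcx
    \<Rightarrow> (int \<Rightarrow> int \<Rightarrow> 'a \<Rightarrow> 'b) \<Rightarrow> bool" where
  "mc_morphism A B f \<longleftrightarrow>
     (\<forall>p q. \<forall>x\<in>car A p q. f p q x \<in> car B p q) \<and>
     (\<forall>p q. lin_on (smul A) (smul B) (car A p q) (f p q)) \<and>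
     (\<forall>i p q. \<forall>x\<in>car A p q. f (p - int i) (q + 1 - int i) (dd A i p q x) = dd B i p q (f p q x))"

definition r_homotopy :: "nat \<Rightarrow> ('r, 'a::ab_group_add) mcx \<Rightarrow> ('r, 'b::ab_group_add) mcx
    \<Rightarrow> (int \<Rightarrow> int \<Rightarrow> 'a \<Rightarrow> 'b) \<Rightarrow> (int \<Rightarrow> int \<Rightarrow> 'a \<Rightarrow> 'b)
    \<Rightarrow> (nat \<Rightarrow> int \<Rightarrow> int \<Rightarrow> 'a \<Rightarrow> 'b) \<Rightarrow> bool" where
  "r_homotopy r A B f g h \<longleftrightarrow>
     (\<forall>m p q. \<forall>x\<in>car A p q. h m p q x \<in> car B (p - int m + int r) (q - int m + int r - 1)) \<and>
     (\<forall>m p q. lin_on (smul A) (smul B) (car A p q) (h m p q)) \<and>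
     (\<forall>m p q. \<forall>x\<in>car A p q.
        (\<Sum>i\<le>m. sgnf (i + r) (dd B i (p - int (m - i) + int r) (q - int (m - i) + int r - 1)
                                   (h (m - i) p q x))
               + sgnf i (h i (p - int (m - i)) (q + 1 - int (m - i)) (dd A (m - i) p q x)))
        = (if m = r then g p q x - f p q x else 0))"

definition r_homotopic :: "nat \<Rightarrow> ('r, 'a::ab_group_add) mcx \<Rightarrow> ('r, 'b::ab_group_add) mcx
    \<Rightarrow> (int \<Rightarrow> int \<Rightarrow> 'a \<Rightarrow> 'b) \<Rightarrow> (int \<Rightarrow> int \<Rightarrow> 'a \<Rightarrow> 'b) \<Rightarrow> bool" where
  "r_homotopic r A B f g \<longleftrightarrow> (\<exists>h. r_homotopy r A B f g h)"

definition r_homotopy_equivalence :: "nat \<Rightarrow> ('r, 'a::ab_group_add) mcx \<Rightarrow> ('r, 'b::ab_group_add) mcx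
    \<Rightarrow> (int \<Rightarrow> int \<Rightarrow> 'a \<Rightarrow> 'b) \<Rightarrow> bool" where
  "r_homotopy_equivalence r A B f \<longleftrightarrow> mc_morphism A B f \<and>
     (\<exists>g. mc_morphism B A g \<and>
          r_homotopic r B B (\<lambda>p q y. f p q (g p q y)) (\<lambda>p q y. y) \<and>
          r_homotopic r A A (\<lambda>p q x. g p q (f p q x)) (\<lambda>p q x. x))"

definition Zr :: "('r, 'a::ab_group_add) mcx \<Rightarrow> nat \<Rightarrow> int \<Rightarrow> int \<Rightarrow> 'a set" where
  "Zr A r p q = {a0 \<in> car A p q. \<exists>a :: nat \<Rightarrow> 'a. a 0 = a0 \<and>
       (\<forall>j. 1 \<le> j \<and> j < r \<longrightarrow> a j \<in> car A (p - int j) (q - int j)) \<and>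
       (\<forall>l<r. (\<Sum>j\<le>l. sgnf (l - j) (dd A (l - j) (p - int j) (q - int j) (a j))) = 0)}"

definition Br :: "('r, 'a::ab_group_add) mcx \<Rightarrow> nat \<Rightarrow> int \<Rightarrow> int \<Rightarrow> 'a set" where
  "Br A r p q =
     (if r = 0 then {0}
      else if r = 1 then {x \<in> car A p q. \<exists>y\<in>car A p (q - 1). dd A 0 p (q - 1) y = x}
      else {x \<in> car A p q. \<exists>b :: nat \<Rightarrow> 'a.
              (\<forall>i<r. b i \<in> car A (p + int r - 1 - int i) (q + int r - 2 - int i)) \<and>
              x = (\<Sum>i<r. sgnf i (dd A i (p + int r - 1 - int (r - 1 - i))
                                        (q + int r - 2 - int (r - 1 - i)) (b (r - 1 - i)))) \<and>
              (\<forall>l. l + 2 \<le> r \<longrightarrow>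
                 (\<Sum>i\<le>l. sgnf i (dd A i (p + int r - 1 - int (l - i))
                                        (q + int r - 2 - int (l - i)) (b (l - i)))) = 0)})"

text \<open>E_r(f) : Z_r/B_r -> Z_r/B_r, bidegree-wise surjective / injective
  (the induced map on quotients, written out).\<close>
definition E_surj :: "('r, 'a::ab_group_add) mcx \<Rightarrow> ('r, 'b::ab_group_add) mcx
    \<Rightarrow> (int \<Rightarrow> int \<Rightarrow> 'a \<Rightarrow> 'b) \<Rightarrow> nat \<Rightarrow> bool" where
  "E_surj A B f r \<longleftrightarrow> (\<forall>p q. \<forall>y\<in>Zr B r p q. \<exists>x\<in>Zr A r p q. f p q x - y \<in> Br B r p q)"

definition E_inj :: "('r, 'a::ab_group_add) mcx \<Rightarrow> ('r, 'b::ab_group_add) mcx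
    \<Rightarrow> (int \<Rightarrow> int \<Rightarrow> 'a \<Rightarrow> 'b) \<Rightarrow> nat \<Rightarrow> bool" where
  "E_inj A B f r \<longleftrightarrow> (\<forall>p q. \<forall>x\<in>Zr A r p q. f p q x \<in> Br B r p q \<longrightarrow> x \<in> Br A r p q)"

definition E_iso :: "('r, 'a::ab_group_add) mcx \<Rightarrow> ('r, 'b::ab_group_add) mcx
    \<Rightarrow> (int \<Rightarrow> int \<Rightarrow> 'a \<Rightarrow> 'b) \<Rightarrow> nat \<Rightarrow> bool" where
  "E_iso A B f r \<longleftrightarrow> E_surj A B f r \<and> E_inj A B f r"

definition Er_quasi_iso :: "nat \<Rightarrow> ('r, 'a::ab_group_add) mcx \<Rightarrow> ('r, 'b::ab_group_add) mcx
    \<Rightarrow> (int \<Rightarrow> int \<Rightarrow> 'a \<Rightarrow> 'b) \<Rightarrow> bool" where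
  "Er_quasi_iso r A B f \<longleftrightarrow> mc_morphism A B f \<and> E_iso A B f (Suc r)"

definition r_fibration :: "nat \<Rightarrow> ('r, 'a::ab_group_add) mcx \<Rightarrow> ('r, 'b::ab_group_add) mcx
    \<Rightarrow> (int \<Rightarrow> int \<Rightarrow> 'a \<Rightarrow> 'b) \<Rightarrow> bool" where
  "r_fibration r A B f \<longleftrightarrow> mc_morphism A B f \<and> (\<forall>i\<le>r. E_surj A B f i)"

definition mc_sum :: "('r, 'a::ab_group_add) mcx \<Rightarrow> ('r, 'b::ab_group_add) mcx \<Rightarrow> ('r, 'a \<times> 'b) mcx" where
  "mc_sum A B = \<lparr> car = (\<lambda>p q. car A p q \<times> car B p q),
                  smul = (\<lambda>c xy. (smul A c (fst xy), smul B c (snd xy))),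
                  dd = (\<lambda>k p q xy. (dd A k p q (fst xy), dd B k p q (snd xy))) \<rparr>"

text \<open>Tensor product L \<otimes> A where L is the free multicomplex over R with finite basis S,
  basis element b of bidegree deg b, and d_k b = sum_c (coef k b c) c.
  (L \<otimes> A)^{p,q} = direct sum over b in S of b \<otimes> A^{p - deg b}, elements represented
  as functions S -> A; d_k(b \<otimes> a) = d_k b \<otimes> a + (-1)^{<(-k,1-k), deg b>} b \<otimes> d_k a.\<close>
definition free_tensor :: "'b set \<Rightarrow> ('b \<Rightarrow> int \<times> int) \<Rightarrow> (nat \<Rightarrow> 'b \<Rightarrow> 'b \<Rightarrow> int)
    \<Rightarrow> ('r::comm_ring_1, 'a::ab_group_add) mcx \<Rightarrow> ('r, 'b \<Rightarrow> 'a) mcx" where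
  "free_tensor S deg coef A =
    \<lparr> car = (\<lambda>p q. {x. (\<forall>b\<in>S. x b \<in> car A (p - fst (deg b)) (q - snd (deg b)))
                        \<and> (\<forall>b. b \<notin> S \<longrightarrow> x b = 0)}),
      smul = (\<lambda>c x b. smul A c (x b)),
      dd = (\<lambda>k p q x g. if g \<in> S then
                 (\<Sum>b\<in>S. smul A (of_int (coef k b g)) (x b))
               + isgn (- int k * fst (deg g) + (1 - int k) * snd (deg g))
                      (dd A k (p - fst (deg g)) (q - snd (deg g)) (x g))
             else 0) \<rparr>"

text \<open>Basis: LMinus = beta_-, LDiag i = beta_{-i,-i}, LOff i = beta_{-i-1,-i},
  L01 = beta_{0,1} (only used for r = 0).\<close>
datatype lbasis = LMinus | LDiag nat | LOff nat | L01

definition lam_basis :: "nat \<Rightarrow> lbasis set" where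
  "lam_basis r = (if r = 0 then {LMinus, LDiag 0, L01}
                  else insert LMinus (LDiag ` {..<r} \<union> LOff ` {..<r}))"

fun lam_deg :: "lbasis \<Rightarrow> int \<times> int" where
  "lam_deg LMinus = (0, 0)"
| "lam_deg (LDiag i) = (- int i, - int i)"
| "lam_deg (LOff i) = (- int i - 1, - int i)"
| "lam_deg L01 = (0, 1)"

definition lam_coef :: "nat \<Rightarrow> nat \<Rightarrow> lbasis \<Rightarrow> lbasis \<Rightarrow> int" where
  "lam_coef r k b c =
    (if r = 0 then
       (if k = 0 \<and> b = LMinus \<and> c = L01 then -1
        else if k = 0 \<and> b = LDiag 0 \<and> c = L01 then 1 else 0)
     else
       (if k = 1 \<and> b = LMinus \<and> c = LOff 0 then -1
        else if k = 1 \<and> (\<exists>i<r. b = LDiag i \<and> c = LOff i) then 1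
        else if k = 0 \<and> (\<exists>i. 1 \<le> i \<and> i < r \<and> b = LDiag i \<and> c = LOff (i - 1)) then 1
        else 0))"

definition Pr :: "nat \<Rightarrow> ('r::comm_ring_1, 'a::ab_group_add) mcx \<Rightarrow> ('r, lbasis \<Rightarrow> 'a) mcx" where
  "Pr r A = free_tensor (lam_basis r) lam_deg (lam_coef r) A"

definition iotaA :: "int \<Rightarrow> int \<Rightarrow> 'a::zero \<Rightarrow> lbasis \<Rightarrow> 'a" where
  "iotaA p q a = (\<lambda>b. if b = LMinus \<or> b = LDiag 0 then a else 0)"

definition piA :: "int \<Rightarrow> int \<Rightarrow> (lbasis \<Rightarrow> 'a) \<Rightarrow> 'a \<times> 'a" where
  "piA p q x = (x LMinus, x (LDiag 0))"

definition diagA :: "int \<Rightarrow> int \<Rightarrow> 'a \<Rightarrow> 'a \<times> 'a" where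
  "diagA p q a = (a, a)"

end

theory Submission
  imports Defs
begin


section \<open>Signs\<close>

lemma sgnf_0[simp]: "sgnf 0 x = x" by (simp add: sgnf_def)
lemma sgnf_Suc: "sgnf (Suc i) x = - sgnf i x" by (simp add: sgnf_def)
lemma sgnf_add: "sgnf i (x + y) = sgnf i x + sgnf i y" by (simp add: sgnf_def)
lemma sgnf_minus: "sgnf i (- x) = - sgnf i x" by (simp add: sgnf_def)
lemma sgnf_diff: "sgnf i (x - y) = sgnf i x - sgnf i y" by (simp add: sgnf_def)
lemma sgnf_zero[simp]: "sgnf i 0 = 0" by (simp add: sgnf_def)
lemma sgnf_sgnf: "sgnf i (sgnf j x) = sgnf (i + j) x" by (simp add: sgnf_def)
lemma sgnf_cong: "even i = even j \<Longrightarrow> sgnf i x = sgnf j x" by (simp add: sgnf_def)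
lemma sgnf_sum: "sgnf i (sum f A) = (\<Sum>a\<in>A. sgnf i (f a))"
  by (simp add: sgnf_def sum_negf)
lemma sgnf_1[simp]: "sgnf 1 x = - x" by (simp add: sgnf_def)
lemma sgnf_fun: "sgnf i f g = sgnf i (f g)" by (simp add: sgnf_def)
lemma sgnf_pair: "sgnf i (x, y) = (sgnf i x, sgnf i y)" by (simp add: sgnf_def)
lemma isgn_sgnf: "isgn (int i) x = sgnf i x" by (simp add: isgn_def sgnf_def)
lemma isgn_cong: "even a = even b \<Longrightarrow> isgn a x = isgn b x" by (simp add: isgn_def)
lemma isgn_0[simp]: "isgn 0 x = x" by (simp add: isgn_def)
lemma sgnf_even: "even i \<Longrightarrow> sgnf i x = x" by (simp add: sgnf_def)
lemma sgnf_odd: "odd i \<Longrightarrow> sgnf i x = - x" by (simp add: sgnf_def)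
lemma sgnf_sgnf_same: "sgnf i (sgnf i x) = x" by (simp add: sgnf_def)

lemma sum_apply_fun: "finite A \<Longrightarrow> (sum f A) x = (\<Sum>a\<in>A. f a x)"
  by (induction A rule: finite_induct) auto

section \<open>Modules and linear maps\<close>

lemma rm_zero: "rmodule_on s S \<Longrightarrow> 0 \<in> S" by (simp add: rmodule_on_def)
lemma rm_add: "rmodule_on s S \<Longrightarrow> x \<in> S \<Longrightarrow> y \<in> S \<Longrightarrow> x + y \<in> S" by (simp add: rmodule_on_def)
lemma rm_minus: "rmodule_on s S \<Longrightarrow> x \<in> S \<Longrightarrow> - x \<in> S" by (simp add: rmodule_on_def)
lemma rm_diff: "rmodule_on s S \<Longrightarrow> x \<in> S \<Longrightarrow> y \<in> S \<Longrightarrow> x - y \<in> S"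
  by (metis diff_conv_add_uminus rm_add rm_minus)
lemma rm_smul: "rmodule_on s S \<Longrightarrow> x \<in> S \<Longrightarrow> s c x \<in> S" by (simp add: rmodule_on_def)
lemma rm_sgnf: "rmodule_on s S \<Longrightarrow> x \<in> S \<Longrightarrow> sgnf i x \<in> S" by (simp add: sgnf_def rm_minus)
lemma rm_isgn: "rmodule_on s S \<Longrightarrow> x \<in> S \<Longrightarrow> isgn i x \<in> S" by (simp add: isgn_def rm_minus)
lemma rm_sum: "rmodule_on s S \<Longrightarrow> (\<And>i. i \<in> I \<Longrightarrow> f i \<in> S) \<Longrightarrow> sum f I \<in> S"
proof (induction I rule: infinite_finite_induct)
  case (infinite A) then show ?case by (simp add: rm_zero)
next
  case empty then show ?case by (simp add: rm_zero)
next
  case (insert x F) then show ?case by (simp add: rm_add)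
qed
lemma rm_smul0: "rmodule_on s S \<Longrightarrow> x \<in> S \<Longrightarrow> s 0 x = 0"
proof -
  assume a: "rmodule_on s S" "x \<in> S"
  then have "s (0 + 0) x = s 0 x + s 0 x" unfolding rmodule_on_def by blast
  then show ?thesis by simp
qed
lemma rm_smul1: "rmodule_on s S \<Longrightarrow> x \<in> S \<Longrightarrow> s 1 x = x" by (simp add: rmodule_on_def)
lemma rm_smulm1: "rmodule_on s S \<Longrightarrow> x \<in> S \<Longrightarrow> s (-1) x = - x"
proof -
  assume a: "rmodule_on s S" "x \<in> S"
  then have "s (-1 + 1) x = s (-1) x + s 1 x" unfolding rmodule_on_def by blast
  then have "0 = s (-1) x + x" using a by (simp add: rm_smul0 rm_smul1)
  then show ?thesis by (simp add: eq_neg_iff_add_eq_0)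
qed

lemma lin_add: "lin_on s t S f \<Longrightarrow> x \<in> S \<Longrightarrow> y \<in> S \<Longrightarrow> f (x + y) = f x + f y" by (simp add: lin_on_def)
lemma lin_zero: "rmodule_on s S \<Longrightarrow> lin_on s t S f \<Longrightarrow> f 0 = 0"
proof -
  assume a: "rmodule_on s S" "lin_on s t S f"
  have "f (0 + 0) = f 0 + f 0" using lin_add[OF a(2) rm_zero[OF a(1)] rm_zero[OF a(1)]] .
  then show ?thesis by simp
qed
lemma lin_minus: "rmodule_on s S \<Longrightarrow> lin_on s t S f \<Longrightarrow> x \<in> S \<Longrightarrow> f (- x) = - f x"
proof -
  assume a: "rmodule_on s S" "lin_on s t S f" "x \<in> S"
  have "f (x + - x) = f x + f (- x)" using lin_add[OF a(2) a(3) rm_minus[OF a(1) a(3)]] .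
  then have "f x + f (- x) = 0" using lin_zero[OF a(1,2)] by simp
  then show ?thesis by (metis add.commute eq_neg_iff_add_eq_0)
qed
lemma lin_diff: "rmodule_on s S \<Longrightarrow> lin_on s t S f \<Longrightarrow> x \<in> S \<Longrightarrow> y \<in> S \<Longrightarrow> f (x - y) = f x - f y"
  by (metis diff_conv_add_uminus lin_add lin_minus rm_minus)
lemma lin_sgnf: "rmodule_on s S \<Longrightarrow> lin_on s t S f \<Longrightarrow> x \<in> S \<Longrightarrow> f (sgnf i x) = sgnf i (f x)"
  using lin_minus[of s S t f x] by (simp add: sgnf_def)
lemma lin_isgn: "rmodule_on s S \<Longrightarrow> lin_on s t S f \<Longrightarrow> x \<in> S \<Longrightarrow> f (isgn i x) = isgn i (f x)"
  using lin_minus[of s S t f x] by (simp add: isgn_def)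
lemma lin_sum: "rmodule_on s S \<Longrightarrow> lin_on s t S f \<Longrightarrow> (\<And>i. i \<in> I \<Longrightarrow> g i \<in> S) \<Longrightarrow> f (sum g I) = (\<Sum>i\<in>I. f (g i))"
proof (induction I rule: infinite_finite_induct)
  case (infinite A) then show ?case using lin_zero by simp
next
  case empty then show ?case using lin_zero by simp
next
  case (insert x F)
  have sF: "sum g F \<in> S" by (rule rm_sum[OF insert(4)]) (use insert in auto)
  have "f (sum g (insert x F)) = f (g x + sum g F)" using insert by simp
  also have "\<dots> = f (g x) + f (sum g F)"
    by (rule lin_add[OF insert(5)]) (use insert sF in auto)
  finally show ?case using insert by simp
qed

section \<open>Multicomplex basics\<close>

context
  fixes n :: enat and A :: "('r::comm_ring_1, 'a::ab_group_add) mcx"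
  assumes mc: "multicomplex n A"
begin

lemma mc_rm: "rmodule_on (smul A) (car A p q)" using mc by (simp add: multicomplex_def)
lemma mc_car: "x \<in> car A p q \<Longrightarrow> dd A i p q x \<in> car A (p - int i) (q + 1 - int i)"
  using mc by (simp add: multicomplex_def)
lemma mc_lin: "lin_on (smul A) (smul A) (car A p q) (dd A i p q)" using mc by (simp add: multicomplex_def)
lemma mc_high: "n \<le> enat i \<Longrightarrow> x \<in> car A p q \<Longrightarrow> dd A i p q x = 0" using mc by (simp add: multicomplex_def)
lemma mc_rel: "x \<in> car A p q \<Longrightarrow>
   (\<Sum>j\<le>l. sgnf (l - j) (dd A (l - j) (p - int j) (q + 1 - int j) (dd A j p q x))) = 0"
  using mc by (simp add: multicomplex_def)

lemma mc_zero[simp]: "dd A i p q 0 = 0" by (rule lin_zero[OF mc_rm mc_lin])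
lemma mc_add: "x \<in> car A p q \<Longrightarrow> y \<in> car A p q \<Longrightarrow> dd A i p q (x + y) = dd A i p q x + dd A i p q y"
  by (rule lin_add[OF mc_lin])
lemma mc_minus: "x \<in> car A p q \<Longrightarrow> dd A i p q (- x) = - dd A i p q x"
  by (rule lin_minus[OF mc_rm mc_lin])
lemma mc_diff: "x \<in> car A p q \<Longrightarrow> y \<in> car A p q \<Longrightarrow> dd A i p q (x - y) = dd A i p q x - dd A i p q y"
  by (rule lin_diff[OF mc_rm mc_lin])
lemma mc_sgnf: "x \<in> car A p q \<Longrightarrow> dd A i p q (sgnf k x) = sgnf k (dd A i p q x)"
  by (rule lin_sgnf[OF mc_rm mc_lin])
lemma mc_isgn: "x \<in> car A p q \<Longrightarrow> dd A i p q (isgn k x) = isgn k (dd A i p q x)"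
  by (rule lin_isgn[OF mc_rm mc_lin])
lemma mc_sum: "(\<And>j. j \<in> I \<Longrightarrow> g j \<in> car A p q) \<Longrightarrow> dd A i p q (sum g I) = (\<Sum>j\<in>I. dd A i p q (g j))"
  by (rule lin_sum[OF mc_rm mc_lin])

lemma car_zero[simp]: "0 \<in> car A p q" by (rule rm_zero[OF mc_rm])
lemma car_add: "x \<in> car A p q \<Longrightarrow> y \<in> car A p q \<Longrightarrow> x + y \<in> car A p q" by (rule rm_add[OF mc_rm])
lemma car_minus: "x \<in> car A p q \<Longrightarrow> - x \<in> car A p q" by (rule rm_minus[OF mc_rm])
lemma car_diff: "x \<in> car A p q \<Longrightarrow> y \<in> car A p q \<Longrightarrow> x - y \<in> car A p q" by (rule rm_diff[OF mc_rm])
lemma car_sgnf: "x \<in> car A p q \<Longrightarrow> sgnf k x \<in> car A p q" by (rule rm_sgnf[OF mc_rm])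
lemma car_isgn: "x \<in> car A p q \<Longrightarrow> isgn k x \<in> car A p q" by (rule rm_isgn[OF mc_rm])
lemma car_sum: "(\<And>j. j \<in> I \<Longrightarrow> g j \<in> car A p q) \<Longrightarrow> sum g I \<in> car A p q" by (rule rm_sum[OF mc_rm])

end




lemma lb_simps[simp]: "LMinus \<in> lam_basis r" "LDiag j \<in> lam_basis r \<longleftrightarrow> j = 0 \<or> j < r"
  "LOff i \<in> lam_basis r \<longleftrightarrow> i < r" "L01 \<in> lam_basis r \<longleftrightarrow> r = 0"
  by (auto simp: lam_basis_def)

lemma lb_finite[simp]: "finite (lam_basis r)"
  by (simp add: lam_basis_def)

lemma car_Pr: "x \<in> car (Pr r A) p q \<longleftrightarrow>
   (\<forall>b\<in>lam_basis r. x b \<in> car A (p - fst (lam_deg b)) (q - snd (lam_deg b))) \<and> (\<forall>b. b \<notin> lam_basis r \<longrightarrow> x b = 0)"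
  by (simp add: Pr_def free_tensor_def)

lemma smul_Pr[simp]: "smul (Pr r A) c x = (\<lambda>b. smul A c (x b))"
  by (simp add: Pr_def free_tensor_def)

lemma car_Pr_b: "x \<in> car (Pr r A) p q \<Longrightarrow> b \<in> lam_basis r \<Longrightarrow> x b \<in> car A (p - fst (lam_deg b)) (q - snd (lam_deg b))"
  unfolding car_Pr by blast
lemma car_Pr_Minus: "x \<in> car (Pr r A) p q \<Longrightarrow> x LMinus \<in> car A p q"
  using car_Pr_b[of x r A p q LMinus] by simp
lemma car_Pr_Diag: "x \<in> car (Pr r A) p q \<Longrightarrow> j = 0 \<or> j < r \<Longrightarrow> x (LDiag j) \<in> car A (p + int j) (q + int j)"
  using car_Pr_b[of x r A p q "LDiag j"] by simp
lemma car_Pr_Off: "x \<in> car (Pr r A) p q \<Longrightarrow> i < r \<Longrightarrow> x (LOff i) \<in> car A (p + int i + 1) (q + int i)"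
  using car_Pr_b[of x r A p q "LOff i"] by (simp add: algebra_simps)
lemma car_Pr_01: "x \<in> car (Pr r A) p q \<Longrightarrow> r = 0 \<Longrightarrow> x L01 \<in> car A p (q - 1)"
  using car_Pr_b[of x r A p q L01] by simp
lemma car_Pr_out: "x \<in> car (Pr r A) p q \<Longrightarrow> b \<notin> lam_basis r \<Longrightarrow> x b = 0"
  unfolding car_Pr by simp

definition prd :: "nat \<Rightarrow> ('r::comm_ring_1, 'a::ab_group_add) mcx \<Rightarrow> nat \<Rightarrow> int \<Rightarrow> int \<Rightarrow> (lbasis \<Rightarrow> 'a) \<Rightarrow> lbasis \<Rightarrow> 'a" where
  "prd r A k p q x g = (if g \<notin> lam_basis r then 0 else (case g of
     LMinus \<Rightarrow> dd A k p q (x LMinus)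
   | LDiag j \<Rightarrow> sgnf j (dd A k (p + int j) (q + int j) (x (LDiag j)))
   | LOff i \<Rightarrow> (if k = 1 then x (LDiag i) - (if i = 0 then x LMinus else 0) else 0)
              + (if k = 0 \<and> i + 1 < r then x (LDiag (i + 1)) else 0)
              + sgnf (k + i) (dd A k (p + int i + 1) (q + int i) (x (LOff i)))
   | L01 \<Rightarrow> (if k = 0 then x (LDiag 0) - x LMinus else 0) + sgnf (k + 1) (dd A k p (q - 1) (x L01))))"

lemma prd_Minus[simp]: "prd r A k p q x LMinus = dd A k p q (x LMinus)" by (simp add: prd_def)
lemma prd_Diag: "j = 0 \<or> j < r \<Longrightarrow> prd r A k p q x (LDiag j) = sgnf j (dd A k (p + int j) (q + int j) (x (LDiag j)))"
  by (simp add: prd_def)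
lemma prd_Off: "i < r \<Longrightarrow> prd r A k p q x (LOff i) = (if k = 1 then x (LDiag i) - (if i = 0 then x LMinus else 0) else 0)
              + (if k = 0 \<and> i + 1 < r then x (LDiag (i + 1)) else 0)
              + sgnf (k + i) (dd A k (p + int i + 1) (q + int i) (x (LOff i)))"
  by (simp add: prd_def)
lemma prd_01: "r = 0 \<Longrightarrow> prd r A k p q x L01 = (if k = 0 then x (LDiag 0) - x LMinus else 0) + sgnf (k + 1) (dd A k p (q - 1) (x L01))"
  by (simp add: prd_def)
lemma prd_out: "g \<notin> lam_basis r \<Longrightarrow> prd r A k p q x g = 0"
  by (simp add: prd_def)

lemma car_cong: "x \<in> car A p q \<Longrightarrow> p = p' \<Longrightarrow> q = q' \<Longrightarrow> x \<in> car A p' q'" by simp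

context
  fixes n :: enat and A :: "('r::comm_ring_1, 'a::ab_group_add) mcx"
  assumes mc: "multicomplex n A"
begin

lemmas [simp] = car_zero[OF mc] mc_zero[OF mc]

lemma smul_zero_vec[simp]: "smul A c 0 = 0"
proof -
  have "smul A c (0 + 0) = smul A c 0 + smul A c 0"
    using mc_rm[OF mc, of 0 0] unfolding rmodule_on_def by blast
  then show ?thesis by simp
qed

lemma smul_add: "x \<in> car A p q \<Longrightarrow> y \<in> car A p q \<Longrightarrow> smul A c (x + y) = smul A c x + smul A c y"
  using mc_rm[OF mc, of p q] unfolding rmodule_on_def by blast
lemma smul_lin: "lin_on (smul A) (smul A) (car A p q) (smul A c)"
proof -
  have "smul A c' (smul A c x) = smul A c (smul A c' x)" if "x \<in> car A p q" for c' x
  proof -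
    have "smul A c' (smul A c x) = smul A (c' * c) x" using that mc_rm[OF mc, of p q] unfolding rmodule_on_def by metis
    also have "\<dots> = smul A (c * c') x" by (simp add: mult.commute)
    also have "\<dots> = smul A c (smul A c' x)" using that mc_rm[OF mc, of p q] unfolding rmodule_on_def by metis
    finally show ?thesis .
  qed
  then show ?thesis unfolding lin_on_def using smul_add by auto
qed
lemma smul_minus: "x \<in> car A p q \<Longrightarrow> smul A c (- x) = - smul A c x"
  by (rule lin_minus[OF mc_rm[OF mc] smul_lin])
lemma smul_diff: "x \<in> car A p q \<Longrightarrow> y \<in> car A p q \<Longrightarrow> smul A c (x - y) = smul A c x - smul A c y"
  by (rule lin_diff[OF mc_rm[OF mc] smul_lin])
lemma smul_sgnf: "x \<in> car A p q \<Longrightarrow> smul A c (sgnf j x) = sgnf j (smul A c x)"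
  by (rule lin_sgnf[OF mc_rm[OF mc] smul_lin])
lemma dd_smul: "x \<in> car A p q \<Longrightarrow> dd A i p q (smul A c x) = smul A c (dd A i p q x)"
  using mc_lin[OF mc, of p q i] unfolding lin_on_def by blast

lemma smul_of_int:
  assumes "y \<in> car A p q"
  shows "smul A (of_int c) y = (if c = 1 then y else if c = -1 then - y else if c = 0 then 0 else smul A (of_int c) y)"
  using rm_smul0[OF mc_rm[OF mc] assms] rm_smul1[OF mc_rm[OF mc] assms] rm_smulm1[OF mc_rm[OF mc] assms]
  by auto

lemma coef_sum:
  assumes x: "x \<in> car (Pr r A) p q" and g: "g \<in> lam_basis r"
  shows "(\<Sum>b\<in>lam_basis r. smul A (of_int (lam_coef r k b g)) (x b)) =
     (case g of LOff i \<Rightarrow> (if k = 1 then x (LDiag i) - (if i = 0 then x LMinus else 0) else 0)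
              + (if k = 0 \<and> i + 1 < r then x (LDiag (i + 1)) else 0)
     | L01 \<Rightarrow> (if k = 0 then x (LDiag 0) - x LMinus else 0) | _ \<Rightarrow> 0)"
proof -
  have inS: "\<And>b. b \<in> lam_basis r \<Longrightarrow> \<exists>p' q'. x b \<in> car A p' q'"
    using car_Pr_b[OF x] by blast
  have sm: "\<And>b c. b \<in> lam_basis r \<Longrightarrow> smul A (of_int c) (x b) =
      (if c = 1 then x b else if c = -1 then - x b else if c = 0 then 0 else smul A (of_int c) (x b))"
    using inS smul_of_int by blast
  show ?thesis
  proof (cases g)
    case LMinus
    then have "\<And>b. b \<in> lam_basis r \<Longrightarrow> smul A (of_int (lam_coef r k b g)) (x b) = 0"
      by (simp add: sm lam_coef_def)
    then show ?thesis using LMinus by simp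
  next
    case (LDiag j)
    then have "\<And>b. b \<in> lam_basis r \<Longrightarrow> smul A (of_int (lam_coef r k b g)) (x b) = 0"
      by (simp add: sm lam_coef_def)
    then show ?thesis using LDiag by simp
  next
    case (LOff i)
    with g have ir: "i < r" by simp
    have "\<And>b. b \<in> lam_basis r \<Longrightarrow> smul A (of_int (lam_coef r k b g)) (x b) =
       (if b = LDiag i then (if k = 1 then x b else 0) else 0)
     + (if b = LMinus then (if k = 1 \<and> i = 0 then - x b else 0) else 0)
     + (if b = LDiag (i + 1) then (if k = 0 \<and> i + 1 < r then x b else 0) else 0)"
      using ir LOff by (auto simp: sm lam_coef_def)
    then have "(\<Sum>b\<in>lam_basis r. smul A (of_int (lam_coef r k b g)) (x b)) =
       (\<Sum>b\<in>lam_basis r. (if b = LDiag i then (if k = 1 then x b else 0) else 0)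
     + (if b = LMinus then (if k = 1 \<and> i = 0 then - x b else 0) else 0)
     + (if b = LDiag (i + 1) then (if k = 0 \<and> i + 1 < r then x b else 0) else 0))"
      by (rule sum.cong[OF refl])
    also have "\<dots> = (if k = 1 then x (LDiag i) else 0) + (if k = 1 \<and> i = 0 then - x LMinus else 0)
       + (if k = 0 \<and> i + 1 < r then x (LDiag (i + 1)) else 0)"
      using ir by (simp add: sum.distrib sum.delta)
    finally show ?thesis using LOff by simp
  next
    case L01
    with g have r0: "r = 0" by simp
    have "\<And>b. b \<in> lam_basis r \<Longrightarrow> smul A (of_int (lam_coef r k b g)) (x b) =
       (if b = LDiag 0 then (if k = 0 then x b else 0) else 0)
     + (if b = LMinus then (if k = 0 then - x b else 0) else 0)"
      using r0 L01 by (auto simp: sm lam_coef_def)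
    then have "(\<Sum>b\<in>lam_basis r. smul A (of_int (lam_coef r k b g)) (x b)) =
       (\<Sum>b\<in>lam_basis r. (if b = LDiag 0 then (if k = 0 then x b else 0) else 0)
     + (if b = LMinus then (if k = 0 then - x b else 0) else 0))"
      by (rule sum.cong[OF refl])
    also have "\<dots> = (if k = 0 then x (LDiag 0) else 0) + (if k = 0 then - x LMinus else 0)"
      by (simp add: sum.distrib sum.delta)
    finally show ?thesis using L01 by simp
  qed
qed

lemma dd_Pr:
  assumes x: "x \<in> car (Pr r A) p q"
  shows "dd (Pr r A) k p q x = prd r A k p q x"
proof
  fix g
  show "dd (Pr r A) k p q x g = prd r A k p q x g"
  proof (cases "g \<in> lam_basis r")
    case False then show ?thesis by (simp add: Pr_def free_tensor_def prd_def)
  next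
    case True
    have cs: "dd (Pr r A) k p q x g = (\<Sum>b\<in>lam_basis r. smul A (of_int (lam_coef r k b g)) (x b))
       + isgn (- int k * fst (lam_deg g) + (1 - int k) * snd (lam_deg g))
            (dd A k (p - fst (lam_deg g)) (q - snd (lam_deg g)) (x g))"
      using True by (simp add: Pr_def free_tensor_def)
    show ?thesis
    proof (cases g)
      case LMinus then show ?thesis using cs coef_sum[OF x True] by (simp add: prd_def)
    next
      case (LDiag j)
      have "isgn (- int k * fst (lam_deg g) + (1 - int k) * snd (lam_deg g)) y = sgnf j y" for y
        unfolding LDiag isgn_sgnf[symmetric] by (rule isgn_cong) (simp add: algebra_simps)
      then show ?thesis using cs coef_sum[OF x True] True LDiag by (simp add: prd_def)
    next
      case (LOff i)
      have sg: "isgn (- int k * fst (lam_deg (LOff i)) + (1 - int k) * snd (lam_deg (LOff i))) y = sgnf (k + i) y" for y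
        unfolding isgn_sgnf[symmetric] by (rule isgn_cong) (simp add: algebra_simps)
      have e1: "p - fst (lam_deg (LOff i)) = p + int i + 1" and e2: "q - snd (lam_deg (LOff i)) = q + int i" by simp_all
      have "dd (Pr r A) k p q x g = (\<Sum>b\<in>lam_basis r. smul A (of_int (lam_coef r k b g)) (x b))
         + sgnf (k + i) (dd A k (p + int i + 1) (q + int i) (x (LOff i)))"
        unfolding cs unfolding LOff e1 e2 sg ..
      then show ?thesis using coef_sum[OF x True] True LOff by (simp add: prd_def)
    next
      case L01
      have "isgn (- int k * fst (lam_deg g) + (1 - int k) * snd (lam_deg g)) y = sgnf (k + 1) y" for y
        unfolding L01 isgn_sgnf[symmetric] by (rule isgn_cong) (simp add: algebra_simps)
      then show ?thesis using cs coef_sum[OF x True] True L01 by (simp add: prd_def)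
    qed
  qed
qed

lemma Pr_rm: "rmodule_on (smul (Pr r A)) (car (Pr r A) p q)"
proof -
  let ?S = "lam_basis r"
  have in_b: "\<And>x b. x \<in> car (Pr r A) p q \<Longrightarrow> b \<in> ?S \<Longrightarrow> x b \<in> car A (p - fst (lam_deg b)) (q - snd (lam_deg b))"
    by (rule car_Pr_b)
  have out_b: "\<And>x b. x \<in> car (Pr r A) p q \<Longrightarrow> b \<notin> ?S \<Longrightarrow> x b = 0"
    by (rule car_Pr_out)
  note R = mc_rm[OF mc]
  show ?thesis unfolding rmodule_on_def
  proof (intro conjI ballI allI)
    show "0 \<in> car (Pr r A) p q" unfolding car_Pr by (simp add: rm_zero[OF R])
  next
    fix x y assume x: "x \<in> car (Pr r A) p q" and y: "y \<in> car (Pr r A) p q"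
    show "x + y \<in> car (Pr r A) p q" unfolding car_Pr using in_b[OF x] in_b[OF y] out_b[OF x] out_b[OF y]
      by (auto intro: rm_add[OF R])
    fix a show "smul (Pr r A) a (x + y) = smul (Pr r A) a x + smul (Pr r A) a y"
    proof
      fix b show "smul (Pr r A) a (x + y) b = (smul (Pr r A) a x + smul (Pr r A) a y) b"
        using in_b[OF x, of b] in_b[OF y, of b] out_b[OF x, of b] out_b[OF y, of b]
        by (cases "b \<in> ?S") (auto simp: smul_add)
    qed
  next
    fix x assume x: "x \<in> car (Pr r A) p q"
    show "- x \<in> car (Pr r A) p q" unfolding car_Pr using in_b[OF x] out_b[OF x]
      by (auto intro: rm_minus[OF R])
    fix c show "smul (Pr r A) c x \<in> car (Pr r A) p q" unfolding car_Pr using in_b[OF x] out_b[OF x]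
      by (auto intro: rm_smul[OF R])
  next
    fix a b x assume x: "x \<in> car (Pr r A) p q"
    show "smul (Pr r A) (a * b) x = smul (Pr r A) a (smul (Pr r A) b x)"
    proof
      fix g show "smul (Pr r A) (a * b) x g = smul (Pr r A) a (smul (Pr r A) b x) g"
        using in_b[OF x, of g] out_b[OF x, of g] R unfolding rmodule_on_def
        by (cases "g \<in> ?S") auto
    qed
    show "smul (Pr r A) (a + b) x = smul (Pr r A) a x + smul (Pr r A) b x"
    proof
      fix g show "smul (Pr r A) (a + b) x g = (smul (Pr r A) a x + smul (Pr r A) b x) g"
        using in_b[OF x, of g] out_b[OF x, of g] R unfolding rmodule_on_def
        by (cases "g \<in> ?S") auto
    qed
  next
    fix x assume x: "x \<in> car (Pr r A) p q"
    show "smul (Pr r A) 1 x = x"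
    proof
      fix g show "smul (Pr r A) 1 x g = x g"
        using in_b[OF x, of g] out_b[OF x, of g] R unfolding rmodule_on_def
        by (cases "g \<in> ?S") auto
    qed
  qed
qed

lemma Pr_dd_car:
  assumes x: "x \<in> car (Pr r A) p q"
  shows "dd (Pr r A) i p q x \<in> car (Pr r A) (p - int i) (q + 1 - int i)"
  unfolding dd_Pr[OF x] car_Pr
proof (intro conjI ballI allI impI)
  fix b assume "b \<notin> lam_basis r" then show "prd r A i p q x b = 0" by (rule prd_out)
next
  fix b assume b: "b \<in> lam_basis r"
  show "prd r A i p q x b \<in> car A (p - int i - fst (lam_deg b)) (q + 1 - int i - snd (lam_deg b))"
  proof (cases b)
    case LMinus then show ?thesis using mc_car[OF mc car_Pr_Minus[OF x]] by simp
  next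
    case (LDiag j)
    with b have j: "j = 0 \<or> j < r" by simp
    show ?thesis unfolding LDiag prd_Diag[OF j]
      by (rule car_sgnf[OF mc], rule car_cong[OF mc_car[OF mc car_Pr_Diag[OF x j]]]) simp_all
  next
    case (LOff a)
    with b have a: "a < r" by simp
    have t1: "(if i = 1 then x (LDiag a) - (if a = 0 then x LMinus else 0) else 0) \<in> car A (p - int i + int a + 1) (q + 1 - int i + int a)"
    proof (cases "i = 1")
      case True
      have "x (LDiag a) \<in> car A (p - int i + int a + 1) (q + 1 - int i + int a)"
        using car_cong[OF car_Pr_Diag[OF x, of a]] a True by simp
      moreover have "(if a = 0 then x LMinus else 0) \<in> car A (p - int i + int a + 1) (q + 1 - int i + int a)"
        using car_Pr_Minus[OF x] True car_zero[OF mc] by auto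
      ultimately show ?thesis using True by (simp add: car_diff[OF mc])
    qed (simp add: car_zero[OF mc])
    have t2: "(if i = 0 \<and> a + 1 < r then x (LDiag (a + 1)) else 0) \<in> car A (p - int i + int a + 1) (q + 1 - int i + int a)"
    proof (cases "i = 0 \<and> a + 1 < r")
      case True
      then show ?thesis using car_cong[OF car_Pr_Diag[OF x, of "a+1"]] by simp
    next
      case False then show ?thesis by (simp only: if_False car_zero[OF mc])
    qed
    have t3: "sgnf (i + a) (dd A i (p + int a + 1) (q + int a) (x (LOff a))) \<in> car A (p - int i + int a + 1) (q + 1 - int i + int a)"
      by (rule car_sgnf[OF mc], rule car_cong[OF mc_car[OF mc car_Pr_Off[OF x a]]]) simp_all
    show ?thesis unfolding LOff prd_Off[OF a] using t1 t2 t3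
      by (simp add: car_add[OF mc] algebra_simps)
  next
    case L01
    with b have r: "r = 0" by simp
    have t1: "(if i = 0 then x (LDiag 0) - x LMinus else 0) \<in> car A (p - int i) (q - int i)"
      using car_Pr_Diag[OF x, of 0] car_Pr_Minus[OF x] by (auto simp: car_diff[OF mc])
    have t2: "sgnf (i + 1) (dd A i p (q - 1) (x L01)) \<in> car A (p - int i) (q - int i)"
      by (rule car_sgnf[OF mc], rule car_cong[OF mc_car[OF mc car_Pr_01[OF x r]]]) simp_all
    show ?thesis unfolding L01 prd_01[OF r] using t1 t2 by (simp add: car_add[OF mc])
  qed
qed

lemma Pr_add_car: "x \<in> car (Pr r A) p q \<Longrightarrow> y \<in> car (Pr r A) p q \<Longrightarrow> x + y \<in> car (Pr r A) p q"
  by (rule rm_add[OF Pr_rm])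
lemma Pr_smul_car: "x \<in> car (Pr r A) p q \<Longrightarrow> smul (Pr r A) c x \<in> car (Pr r A) p q"
  by (rule rm_smul[OF Pr_rm])

lemma Pr_dd_add:
  assumes x: "x \<in> car (Pr r A) p q" and y: "y \<in> car (Pr r A) p q"
  shows "dd (Pr r A) i p q (x + y) = dd (Pr r A) i p q x + dd (Pr r A) i p q y"
  unfolding dd_Pr[OF x] dd_Pr[OF y] dd_Pr[OF Pr_add_car[OF x y]]
proof
  fix g show "prd r A i p q (x + y) g = (prd r A i p q x + prd r A i p q y) g"
  proof (cases "g \<in> lam_basis r")
    case False then show ?thesis by (simp add: prd_out)
  next
    case b: True
    show ?thesis
    proof (cases g)
      case LMinus then show ?thesis using mc_add[OF mc car_Pr_Minus[OF x] car_Pr_Minus[OF y]] by simp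
    next
      case (LDiag j)
      with b have j: "j = 0 \<or> j < r" by simp
      show ?thesis unfolding LDiag using mc_add[OF mc car_Pr_Diag[OF x j] car_Pr_Diag[OF y j]]
        by (simp add: prd_Diag[OF j] sgnf_add)
    next
      case (LOff a)
      with b have a: "a < r" by simp
      show ?thesis unfolding LOff using mc_add[OF mc car_Pr_Off[OF x a] car_Pr_Off[OF y a]]
        by (simp add: prd_Off[OF a] sgnf_add algebra_simps)
    next
      case L01
      with b have r: "r = 0" by simp
      show ?thesis unfolding L01 using mc_add[OF mc car_Pr_01[OF x r] car_Pr_01[OF y r]]
        by (simp add: prd_01[OF r] sgnf_add algebra_simps)
    qed
  qed
qed

lemma Pr_dd_smul:
  assumes x: "x \<in> car (Pr r A) p q"
  shows "dd (Pr r A) i p q (smul (Pr r A) c x) = smul (Pr r A) c (dd (Pr r A) i p q x)"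
  unfolding dd_Pr[OF x] dd_Pr[OF Pr_smul_car[OF x]]
proof
  fix g
  have xs: "smul (Pr r A) c x = (\<lambda>b. smul A c (x b))" by simp
  show "prd r A i p q (smul (Pr r A) c x) g = smul (Pr r A) c (prd r A i p q x) g"
  proof (cases "g \<in> lam_basis r")
    case False then show ?thesis by (simp add: prd_out)
  next
    case b: True
    show ?thesis
    proof (cases g)
      case LMinus then show ?thesis using dd_smul[OF car_Pr_Minus[OF x]] by simp
    next
      case (LDiag j)
      with b have j: "j = 0 \<or> j < r" by simp
      show ?thesis unfolding LDiag xs using dd_smul[OF car_Pr_Diag[OF x j]]
        smul_sgnf[OF mc_car[OF mc car_Pr_Diag[OF x j]]]
        by (simp add: prd_Diag[OF j])
    next
      case (LOff a)
      with b have a: "a < r" by simp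
      let ?P = "p - int i + int a + 1" and ?Q = "q + 1 - int i + int a"
      define T1 where "T1 = (if i = 1 then x (LDiag a) - (if a = 0 then x LMinus else 0) else 0)"
      define T2 where "T2 = (if i = 0 \<and> a + 1 < r then x (LDiag (a + 1)) else 0)"
      define T3 where "T3 = sgnf (i + a) (dd A i (p + int a + 1) (q + int a) (x (LOff a)))"
      have t1: "T1 \<in> car A ?P ?Q"
      proof (cases "i = 1")
        case True
        have "x (LDiag a) \<in> car A ?P ?Q"
          using car_cong[OF car_Pr_Diag[OF x, of a]] a True by simp
        moreover have "(if a = 0 then x LMinus else 0) \<in> car A ?P ?Q"
          using car_Pr_Minus[OF x] True by auto
        ultimately show ?thesis using True by (simp add: T1_def car_diff[OF mc])
      qed (simp add: T1_def)
      have t2: "T2 \<in> car A ?P ?Q"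
      proof (cases "i = 0 \<and> a + 1 < r")
        case True
        then show ?thesis using car_cong[OF car_Pr_Diag[OF x, of "a+1"]] by (simp add: T2_def)
      next
        case False then show ?thesis by (simp only: T2_def if_False car_zero[OF mc])
      qed
      have t3: "T3 \<in> car A ?P ?Q" unfolding T3_def
        by (rule car_sgnf[OF mc], rule car_cong[OF mc_car[OF mc car_Pr_Off[OF x a]]]) simp_all
      have s1: "smul A c T1 = (if i = 1 then smul A c (x (LDiag a)) - (if a = 0 then smul A c (x LMinus) else 0) else 0)"
      proof (cases "i = 1")
        case True
        have "x (LDiag a) \<in> car A (p + int a) (q + int a)" using car_Pr_Diag[OF x, of a] a by simp
        moreover have "(if a = 0 then x LMinus else 0) \<in> car A (p + int a) (q + int a)"
          using car_Pr_Minus[OF x] by auto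
        ultimately show ?thesis using True by (auto simp: T1_def smul_diff)
      qed (simp add: T1_def)
      have s2: "smul A c T2 = (if i = 0 \<and> a + 1 < r then smul A c (x (LDiag (a + 1))) else 0)"
        by (simp add: T2_def)
      have s3: "smul A c T3 = sgnf (i + a) (dd A i (p + int a + 1) (q + int a) (smul A c (x (LOff a))))"
        unfolding T3_def using dd_smul[OF car_Pr_Off[OF x a]] smul_sgnf[OF mc_car[OF mc car_Pr_Off[OF x a]]]
        by simp
      have "smul A c (T1 + T2 + T3) = smul A c T1 + smul A c T2 + smul A c T3"
        using smul_add[OF car_add[OF mc t1 t2] t3] smul_add[OF t1 t2] by simp
      then show ?thesis unfolding LOff xs using s1 s2 s3
        by (simp add: prd_Off[OF a] T1_def T2_def T3_def)
    next
      case L01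
      with b have r: "r = 0" by simp
      define T1 where "T1 = (if i = 0 then x (LDiag 0) - x LMinus else 0)"
      define T3 where "T3 = sgnf (i + 1) (dd A i p (q - 1) (x L01))"
      have t1: "T1 \<in> car A (p - int i) (q - int i)"
        using car_Pr_Diag[OF x, of 0] car_Pr_Minus[OF x] by (auto simp: car_diff[OF mc] T1_def)
      have t3: "T3 \<in> car A (p - int i) (q - int i)" unfolding T3_def
        by (rule car_sgnf[OF mc], rule car_cong[OF mc_car[OF mc car_Pr_01[OF x r]]]) simp_all
      have s1: "smul A c T1 = (if i = 0 then smul A c (x (LDiag 0)) - smul A c (x LMinus) else 0)"
        using car_Pr_Diag[OF x, of 0] car_Pr_Minus[OF x] by (auto simp: T1_def smul_diff)
      have s3: "smul A c T3 = sgnf (i + 1) (dd A i p (q - 1) (smul A c (x L01)))"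
        unfolding T3_def using dd_smul[OF car_Pr_01[OF x r]] smul_sgnf[OF mc_car[OF mc car_Pr_01[OF x r]]]
        by simp
      have "smul A c (T1 + T3) = smul A c T1 + smul A c T3"
        using smul_add[OF t1 t3] by simp
      then show ?thesis unfolding L01 xs using s1 s3
        by (simp add: prd_01[OF r] T1_def T3_def)
    qed
  qed
qed

lemma Pr_dd_high:
  assumes n2: "2 \<le> n" and ni: "n \<le> enat i" and x: "x \<in> car (Pr r A) p q"
  shows "dd (Pr r A) i p q x = 0"
  unfolding dd_Pr[OF x]
proof
  fix g
  have i2: "2 \<le> i" using n2 ni by (metis enat_ord_simps(1) numeral_eq_enat order_trans)
  show "prd r A i p q x g = 0 g"
  proof (cases "g \<in> lam_basis r")
    case False then show ?thesis by (simp add: prd_out)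
  next
    case b: True
    show ?thesis
    proof (cases g)
      case LMinus then show ?thesis using mc_high[OF mc ni car_Pr_Minus[OF x]] by simp
    next
      case (LDiag j)
      with b have j: "j = 0 \<or> j < r" by simp
      show ?thesis unfolding LDiag using mc_high[OF mc ni car_Pr_Diag[OF x j]] by (simp add: prd_Diag[OF j])
    next
      case (LOff a)
      with b have a: "a < r" by simp
      show ?thesis unfolding LOff using mc_high[OF mc ni car_Pr_Off[OF x a]] i2 by (simp add: prd_Off[OF a])
    next
      case L01
      with b have r: "r = 0" by simp
      show ?thesis unfolding L01 using mc_high[OF mc ni car_Pr_01[OF x r]] i2 by (simp add: prd_01[OF r])
    qed
  qed
qed

end



lemma sum_delta_atMost: "(\<Sum>j\<le>(l::nat). if j = c then f j else 0) = (if c \<le> l then f c else 0)"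
  by (simp add: sum.delta')

lemma sgnf_Suc0[simp]: "sgnf (Suc 0) x = - x" by (simp add: sgnf_def)

lemma sgnf3: "sgnf a (sgnf b (sgnf c z)) = sgnf (a + b + c) z" by (simp add: sgnf_sgnf add.assoc)

context
  fixes n :: enat and A :: "('r::comm_ring_1, 'a::ab_group_add) mcx"
  assumes mc: "multicomplex n A"
begin

lemmas [simp] = car_zero[OF mc] mc_zero[OF mc]

lemma Pr_rel:
  assumes x: "x \<in> car (Pr r A) p q"
  shows "(\<Sum>j\<le>l. sgnf (l - j) (dd (Pr r A) (l - j) (p - int j) (q + 1 - int j) (dd (Pr r A) j p q x))) = 0"
proof -
  define y where "y j = dd (Pr r A) j p q x" for j
  have yc: "y j \<in> car (Pr r A) (p - int j) (q + 1 - int j)" for j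
    unfolding y_def by (rule Pr_dd_car[OF mc x])
  have ye: "y j = prd r A j p q x" for j unfolding y_def by (rule dd_Pr[OF mc x])
  have "(\<Sum>j\<le>l. sgnf (l - j) (dd (Pr r A) (l - j) (p - int j) (q + 1 - int j) (dd (Pr r A) j p q x)))
     = (\<Sum>j\<le>l. sgnf (l - j) (prd r A (l - j) (p - int j) (q + 1 - int j) (y j)))"
    unfolding y_def[symmetric] by (rule sum.cong[OF refl]) (simp add: dd_Pr[OF mc yc])
  also have "\<dots> = 0"
  proof
    fix g
    have ev: "(\<Sum>j\<le>l. sgnf (l - j) (prd r A (l - j) (p - int j) (q + 1 - int j) (y j))) g
       = (\<Sum>j\<le>l. sgnf (l - j) (prd r A (l - j) (p - int j) (q + 1 - int j) (y j) g))"
      by (simp add: sum_apply_fun sgnf_fun)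
    have "(\<Sum>j\<le>l. sgnf (l - j) (prd r A (l - j) (p - int j) (q + 1 - int j) (y j) g)) = 0"
    proof (cases "g \<in> lam_basis r")
      case False then show ?thesis by (simp add: prd_out)
    next
      case b: True
      show ?thesis
      proof (cases g)
        case LMinus
        show ?thesis unfolding LMinus using mc_rel[OF mc car_Pr_Minus[OF x], of l] by (simp add: ye)
      next
        case (LDiag j0)
        with b have j0: "j0 = 0 \<or> j0 < r" by simp
        have xc: "x (LDiag j0) \<in> car A (p + int j0) (q + int j0)" by (rule car_Pr_Diag[OF x j0])
        have "(\<Sum>j\<le>l. sgnf (l - j) (prd r A (l - j) (p - int j) (q + 1 - int j) (y j) (LDiag j0)))
          = (\<Sum>j\<le>l. sgnf (l - j) (dd A (l - j) (p + int j0 - int j) (q + int j0 + 1 - int j)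
                (dd A j (p + int j0) (q + int j0) (x (LDiag j0)))))"
        proof (rule sum.cong[OF refl])
          fix j
          have e1: "p - int j + int j0 = p + int j0 - int j" and e2: "q + 1 - int j + int j0 = q + int j0 + 1 - int j" by simp_all
          have c: "dd A j (p + int j0) (q + int j0) (x (LDiag j0)) \<in> car A (p + int j0 - int j) (q + int j0 + 1 - int j)"
            by (rule mc_car[OF mc xc])
          show "sgnf (l - j) (prd r A (l - j) (p - int j) (q + 1 - int j) (y j) (LDiag j0)) =
             sgnf (l - j) (dd A (l - j) (p + int j0 - int j) (q + int j0 + 1 - int j) (dd A j (p + int j0) (q + int j0) (x (LDiag j0))))"
            unfolding prd_Diag[OF j0] ye e1 e2 mc_sgnf[OF mc c] sgnf_sgnf_same ..
        qed
        also have "\<dots> = 0" by (rule mc_rel[OF mc xc])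
        finally show ?thesis using LDiag by simp
      next
        case (LOff a)
        with b have a: "a < r" by simp
        have xD: "x (LDiag a) \<in> car A (p + int a) (q + int a)" using car_Pr_Diag[OF x, of a] a by simp
        have xM: "x LMinus \<in> car A p q" by (rule car_Pr_Minus[OF x])
        have xO: "x (LOff a) \<in> car A (p + int a + 1) (q + int a)" by (rule car_Pr_Off[OF x a])
        define U where "U = x (LDiag a) - (if a = 0 then x LMinus else 0)"
        have Uc: "U \<in> car A (p + int a) (q + int a)" unfolding U_def using xD xM by (auto simp: car_diff[OF mc])
        define V where "V = (if a + 1 < r then x (LDiag (a + 1)) else 0)"
        have Vc: "V \<in> car A (p + int a + 1) (q + int a + 1)" unfolding V_def using car_Pr_Diag[OF x, of "a+1"]
          by (auto simp: algebra_simps)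
        have dU: "sgnf a (dd A k (p + int a) (q + int a) U) = sgnf a (dd A k (p + int a) (q + int a) (x (LDiag a)))
           - (if a = 0 then dd A k p q (x LMinus) else 0)" for k
          unfolding U_def using xD xM by (auto simp: mc_diff[OF mc] sgnf_diff)
        define T where "T (j::nat) = sgnf (l - j) (prd r A (l - j) (p - int j) (q + 1 - int j) (y j) (LOff a))" for j
        define A1 where "A1 (j::nat) = (if j = l - 1 \<and> 1 \<le> l then - sgnf a (dd A (l - 1) (p + int a) (q + int a) U) else 0)" for j
        define B1 where "B1 (j::nat) = (if j = 1 \<and> 1 \<le> l then sgnf a (dd A (l - 1) (p + int a) (q + int a) U) else 0)" for j
        define A2 where "A2 (j::nat) = (if j = l then sgnf (a + 1) (dd A l (p + int a + 1) (q + int a + 1) V) else 0)" for j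
        define B2 where "B2 (j::nat) = (if j = 0 then sgnf a (dd A l (p + int a + 1) (q + int a + 1) V) else 0)" for j
        define B3 where "B3 (j::nat) = sgnf l (sgnf (l - j) (dd A (l - j) (p + int a + 1 - int j) (q + int a + 1 - int j)
               (dd A j (p + int a + 1) (q + int a) (x (LOff a)))))" for j
        have Tj: "T j = A1 j + B1 j + A2 j + B2 j + B3 j" if j: "j \<le> l" for j
        proof -
          have yO: "y j (LOff a) = (if j = 1 then U else 0) + (if j = 0 then V else 0)
              + sgnf (j + a) (dd A j (p + int a + 1) (q + int a) (x (LOff a)))"
            unfolding ye prd_Off[OF a] U_def V_def by simp
          have c1: "(if j = 1 then U else 0) \<in> car A (p - int j + int a + 1) (q + 1 - int j + int a)"
            using Uc by auto
          have c2: "(if j = 0 then V else 0) \<in> car A (p - int j + int a + 1) (q + 1 - int j + int a)"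
            using Vc by (auto simp: algebra_simps)
          have c3: "sgnf (j + a) (dd A j (p + int a + 1) (q + int a) (x (LOff a))) \<in> car A (p - int j + int a + 1) (q + 1 - int j + int a)"
            by (rule car_sgnf[OF mc], rule car_cong[OF mc_car[OF mc xO]]) simp_all
          have c3': "dd A j (p + int a + 1) (q + int a) (x (LOff a)) \<in> car A (p - int j + int a + 1) (q + 1 - int j + int a)"
            by (rule car_cong[OF mc_car[OF mc xO]]) simp_all
          let ?D = "dd A (l - j) (p - int j + int a + 1) (q + 1 - int j + int a)"
          have DyO: "?D (y j (LOff a)) = ?D (if j = 1 then U else 0) + ?D (if j = 0 then V else 0)
              + sgnf (j + a) (?D (dd A j (p + int a + 1) (q + int a) (x (LOff a))))"
            unfolding yO using mc_add[OF mc car_add[OF mc c1 c2] c3] mc_add[OF mc c1 c2] mc_sgnf[OF mc c3']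
            by simp
          have e3: "?D (dd A j (p + int a + 1) (q + int a) (x (LOff a))) = dd A (l - j) (p + int a + 1 - int j) (q + int a + 1 - int j)
               (dd A j (p + int a + 1) (q + int a) (x (LOff a)))"
            by (rule arg_cong2[where f="\<lambda>u v. dd A (l - j) u v _"]) simp_all
          have B3e: "sgnf (l - j) (sgnf (l - j + a) (sgnf (j + a) (?D (dd A j (p + int a + 1) (q + int a) (x (LOff a)))))) = B3 j"
            unfolding B3_def e3 sgnf3 sgnf_sgnf by (rule sgnf_cong) (use j in auto)
          have B1e: "sgnf (l - j) (sgnf (l - j + a) (?D (if j = 1 then U else 0))) = B1 j"
          proof (cases "j = 1")
            case True
            then have "sgnf (l - j) (sgnf (l - j + a) (?D (if j = 1 then U else 0))) = sgnf (l - 1 + (l - 1 + a)) (dd A (l - 1) (p + int a) (q + int a) U)"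
              by (simp add: sgnf_sgnf)
            also have "\<dots> = sgnf a (dd A (l - 1) (p + int a) (q + int a) U)" by (rule sgnf_cong) auto
            finally show ?thesis unfolding B1_def using True j by simp
          qed (simp add: B1_def)
          have B2e: "sgnf (l - j) (sgnf (l - j + a) (?D (if j = 0 then V else 0))) = B2 j"
          proof (cases "j = 0")
            case True
            have e1: "p - int j + int a + 1 = p + int a + 1" "q + 1 - int j + int a = q + int a + 1" "l - j = l"
              using True by simp_all
            have e: "?D V = dd A l (p + int a + 1) (q + int a + 1) V"
              by (simp only: e1)
            have "sgnf (l - j) (sgnf (l - j + a) (?D (if j = 0 then V else 0))) = sgnf (l + (l + a)) (dd A l (p + int a + 1) (q + int a + 1) V)"
              using True e by (simp add: sgnf_sgnf)
            also have "\<dots> = sgnf a (dd A l (p + int a + 1) (q + int a + 1) V)" by (rule sgnf_cong) auto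
            finally show ?thesis unfolding B2_def using True by simp
          qed (simp add: B2_def)
          have A1e: "sgnf (l - j) (if l - j = 1 then y j (LDiag a) - (if a = 0 then y j LMinus else 0) else 0) = A1 j"
          proof (cases "l - j = 1")
            case True
            then have jl: "j = l - 1" "1 \<le> l" by auto
            have "y j (LDiag a) - (if a = 0 then y j LMinus else 0) = sgnf a (dd A (l - 1) (p + int a) (q + int a) U)"
              unfolding ye dU using a jl by (simp add: prd_Diag)
            then show ?thesis unfolding A1_def using True jl by simp
          next
            case False
            then have "\<not> (j = l - 1 \<and> 1 \<le> l)" using j by auto
            then show ?thesis unfolding A1_def using False by auto
          qed
          have A2e: "sgnf (l - j) (if l - j = 0 \<and> a + 1 < r then y j (LDiag (a + 1)) else 0) = A2 j"
          proof (cases "j = l")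
            case True
            then show ?thesis unfolding A2_def V_def using True
              by (auto simp: ye prd_Diag algebra_simps)
          next
            case False
            then show ?thesis unfolding A2_def using j by simp
          qed
          have "T j = A1 j + A2 j + (B1 j + B2 j + B3 j)"
            unfolding T_def prd_Off[OF a] DyO sgnf_add A1e A2e B1e B2e B3e ..
          then show ?thesis by (simp add: algebra_simps)
        qed
        have "(\<Sum>j\<le>l. sgnf (l - j) (prd r A (l - j) (p - int j) (q + 1 - int j) (y j) (LOff a))) = (\<Sum>j\<le>l. T j)"
          unfolding T_def ..
        also have "\<dots> = (\<Sum>j\<le>l. A1 j + B1 j + A2 j + B2 j + B3 j)"
          by (rule sum.cong[OF refl]) (simp add: Tj)
        also have "\<dots> = sum A1 {..l} + sum B1 {..l} + sum A2 {..l} + sum B2 {..l} + sum B3 {..l}"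
          by (simp add: sum.distrib)
        also have "\<dots> = 0"
        proof -
          have s1: "sum A1 {..l} + sum B1 {..l} = 0"
            by (cases "l = 0") (simp_all add: A1_def B1_def sum.delta')
          have s2: "sum A2 {..l} + sum B2 {..l} = 0"
            by (simp add: A2_def B2_def sum.delta' sgnf_Suc)
          have s3: "sum B3 {..l} = 0"
            unfolding B3_def sgnf_sum[symmetric] using mc_rel[OF mc xO, of l] by simp
          show ?thesis using s1 s2 s3 by (simp add: algebra_simps)
        qed
        finally show ?thesis using LOff by simp
      next
        case L01
        with b have r: "r = 0" by simp
        have xD: "x (LDiag 0) \<in> car A p q" using car_Pr_Diag[OF x, of 0] by simp
        have xM: "x LMinus \<in> car A p q" by (rule car_Pr_Minus[OF x])
        have xO: "x L01 \<in> car A p (q - 1)" by (rule car_Pr_01[OF x r])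
        define W where "W = x (LDiag 0) - x LMinus"
        have Wc: "W \<in> car A p q" unfolding W_def using xD xM by (simp add: car_diff[OF mc])
        define C1 where "C1 (j::nat) = (if j = l then dd A l p q W else 0)" for j
        define C2 where "C2 (j::nat) = (if j = 0 then - dd A l p q W else 0)" for j
        define C3 where "C3 (j::nat) = sgnf l (sgnf (l - j) (dd A (l - j) (p - int j) (q - 1 + 1 - int j)
               (dd A j p (q - 1) (x L01))))" for j
        have Tj: "sgnf (l - j) (prd r A (l - j) (p - int j) (q + 1 - int j) (y j) L01) = C1 j + C2 j + C3 j"
          if j: "j \<le> l" for j
        proof -
          have yO: "y j L01 = (if j = 0 then W else 0) + sgnf (j + 1) (dd A j p (q - 1) (x L01))"
            unfolding ye prd_01[OF r] W_def by simp
          let ?D = "dd A (l - j) (p - int j) (q + 1 - int j - 1)"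
          have c1: "(if j = 0 then W else 0) \<in> car A (p - int j) (q + 1 - int j - 1)" using Wc by auto
          have c3': "dd A j p (q - 1) (x L01) \<in> car A (p - int j) (q + 1 - int j - 1)"
            by (rule car_cong[OF mc_car[OF mc xO]]) simp_all
          have c3: "sgnf (j + 1) (dd A j p (q - 1) (x L01)) \<in> car A (p - int j) (q + 1 - int j - 1)"
            by (rule car_sgnf[OF mc c3'])
          have DyO: "?D (y j L01) = ?D (if j = 0 then W else 0) + sgnf (j + 1) (?D (dd A j p (q - 1) (x L01)))"
            unfolding yO using mc_add[OF mc c1 c3] mc_sgnf[OF mc c3'] by simp
          have e3: "?D (dd A j p (q - 1) (x L01)) = dd A (l - j) (p - int j) (q - 1 + 1 - int j) (dd A j p (q - 1) (x L01))"
            by (rule arg_cong2[where f="\<lambda>u v. dd A (l - j) u v _"]) simp_all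
          have C3e: "sgnf (l - j) (sgnf (l - j + 1) (sgnf (j + 1) (?D (dd A j p (q - 1) (x L01))))) = C3 j"
            unfolding C3_def e3 sgnf3 sgnf_sgnf by (rule sgnf_cong) (use j in auto)
          have C2e: "sgnf (l - j) (sgnf (l - j + 1) (?D (if j = 0 then W else 0))) = C2 j"
          proof (cases "j = 0")
            case True
            have e1: "p - int j = p" "q + 1 - int j - 1 = q" "l - j = l" using True by simp_all
            have "sgnf (l - j) (sgnf (l - j + 1) (?D (if j = 0 then W else 0))) = sgnf (l + (l + 1)) (dd A l p q W)"
              unfolding e1 using True by (simp add: sgnf_sgnf)
            also have "\<dots> = - dd A l p q W" by (rule sgnf_odd) auto
            finally show ?thesis unfolding C2_def using True by simp
          qed (simp add: C2_def)
          have C1e: "sgnf (l - j) (if l - j = 0 then y j (LDiag 0) - y j LMinus else 0) = C1 j"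
          proof (cases "j = l")
            case True
            then show ?thesis unfolding C1_def W_def using xD xM
              by (simp add: ye prd_Diag mc_diff[OF mc])
          next
            case False
            then show ?thesis unfolding C1_def using j by simp
          qed
          show ?thesis
            unfolding prd_01[OF r] DyO sgnf_add C1e C2e C3e by (simp add: algebra_simps)
        qed
        have "(\<Sum>j\<le>l. sgnf (l - j) (prd r A (l - j) (p - int j) (q + 1 - int j) (y j) L01))
            = (\<Sum>j\<le>l. C1 j + C2 j + C3 j)"
          by (rule sum.cong[OF refl]) (simp add: Tj)
        also have "\<dots> = sum C1 {..l} + sum C2 {..l} + sum C3 {..l}"
          by (simp add: sum.distrib)
        also have "\<dots> = 0"
        proof -
          have s1: "sum C1 {..l} + sum C2 {..l} = 0"
            by (simp add: C1_def C2_def sum.delta')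
          have s3: "sum C3 {..l} = 0"
            unfolding C3_def sgnf_sum[symmetric] using mc_rel[OF mc xO, of l] by simp
          show ?thesis using s1 s3 by simp
        qed
        finally show ?thesis using L01 by simp
      qed
    qed
    then show "(\<Sum>j\<le>l. sgnf (l - j) (prd r A (l - j) (p - int j) (q + 1 - int j) (y j))) g = 0 g"
      using ev by simp
  qed
  finally show ?thesis .
qed

lemma Pr_multicomplex:
  assumes n2: "2 \<le> n"
  shows "multicomplex n (Pr r A)"
  unfolding multicomplex_def
proof (intro conjI allI ballI impI)
  fix p q show "rmodule_on (smul (Pr r A)) (car (Pr r A) p q)" by (rule Pr_rm[OF mc])
next
  fix i p q x assume "x \<in> car (Pr r A) p q"
  then show "dd (Pr r A) i p q x \<in> car (Pr r A) (p - int i) (q + 1 - int i)" by (rule Pr_dd_car[OF mc])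
next
  fix i p q show "lin_on (smul (Pr r A)) (smul (Pr r A)) (car (Pr r A) p q) (dd (Pr r A) i p q)"
    unfolding lin_on_def using Pr_dd_add[OF mc] Pr_dd_smul[OF mc] by blast
next
  fix i p q x assume "n \<le> enat i" "x \<in> car (Pr r A) p q"
  then show "dd (Pr r A) i p q x = 0" by (rule Pr_dd_high[OF mc n2])
next
  fix l p q x assume "x \<in> car (Pr r A) p q"
  then show "(\<Sum>j\<le>l. sgnf (l - j) (dd (Pr r A) (l - j) (p - int j) (q + 1 - int j) (dd (Pr r A) j p q x))) = 0"
    by (rule Pr_rel)
qed

end



definition prM :: "int \<Rightarrow> int \<Rightarrow> (lbasis \<Rightarrow> 'a) \<Rightarrow> 'a" where
  "prM p q x = x LMinus"

definition Hh :: "nat \<Rightarrow> nat \<Rightarrow> int \<Rightarrow> int \<Rightarrow> (lbasis \<Rightarrow> 'a::ab_group_add) \<Rightarrow> lbasis \<Rightarrow> 'a" where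
  "Hh r m p q x g = (if r = 0 then (if m = 0 \<and> g = LDiag 0 then x L01 else 0)
     else (case g of LDiag j \<Rightarrow> if j < r \<and> m < r \<and> j \<le> m then sgnf (r + 1) (x (LOff (j + r - 1 - m))) else 0
           | _ \<Rightarrow> 0))"

lemma iotaA_apply: "iotaA p q a b = (if b = LMinus \<or> b = LDiag 0 then a else 0)"
  by (simp add: iotaA_def)

context
  fixes n :: enat and A :: "('r::comm_ring_1, 'a::ab_group_add) mcx"
  assumes mc: "multicomplex n A"
begin

lemmas [simp] = car_zero[OF mc] mc_zero[OF mc] smul_zero_vec[OF mc]

lemma iota_car: assumes a: "a \<in> car A p q" shows "iotaA p q a \<in> car (Pr r A) p q"
  unfolding car_Pr
proof (intro conjI ballI allI impI)
  fix b assume "b \<in> lam_basis r"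
  show "iotaA p q a b \<in> car A (p - fst (lam_deg b)) (q - snd (lam_deg b))"
    using a by (cases b) (auto simp: iotaA_apply)
next
  fix b assume "b \<notin> lam_basis r"
  then have "b \<noteq> LMinus \<and> b \<noteq> LDiag 0" by auto
  then show "iotaA p q a b = 0" by (simp add: iotaA_apply)
qed

lemma iota_morph: "mc_morphism A (Pr r A) iotaA"
  unfolding mc_morphism_def
proof (intro conjI allI ballI)
  fix p q a assume "a \<in> car A p q" then show "iotaA p q a \<in> car (Pr r A) p q" by (rule iota_car)
next
  fix p q show "lin_on (smul A) (smul (Pr r A)) (car A p q) (iotaA p q)"
    unfolding lin_on_def
  proof (intro conjI ballI allI)
    fix x y :: 'a show "iotaA p q (x + y) = iotaA p q x + iotaA p q y" by (rule ext) (simp add: iotaA_apply)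
  next
    fix c and x :: 'a show "iotaA p q (smul A c x) = smul (Pr r A) c (iotaA p q x)" by (rule ext) (simp add: iotaA_apply)
  qed
next
  fix i p q a assume a: "a \<in> car A p q"
  show "iotaA (p - int i) (q + 1 - int i) (dd A i p q a) = dd (Pr r A) i p q (iotaA p q a)"
    unfolding dd_Pr[OF mc iota_car[OF a]]
  proof
    fix g show "iotaA (p - int i) (q + 1 - int i) (dd A i p q a) g = prd r A i p q (iotaA p q a) g"
    proof (cases "g \<in> lam_basis r")
      case False
      then have "g \<noteq> LMinus \<and> g \<noteq> LDiag 0" by auto
      then show ?thesis using False by (simp add: prd_out iotaA_apply)
    next
      case b: True
      show ?thesis
      proof (cases g)
        case LMinus then show ?thesis by (simp add: iotaA_apply)
      next
        case (LDiag j)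
        with b have j: "j = 0 \<or> j < r" by simp
        show ?thesis unfolding LDiag prd_Diag[OF j] by (simp add: iotaA_apply)
      next
        case (LOff c)
        with b have c: "c < r" by simp
        show ?thesis unfolding LOff prd_Off[OF c] by (simp add: iotaA_apply)
      next
        case L01
        with b have r: "r = 0" by simp
        show ?thesis unfolding L01 prd_01[OF r] by (simp add: iotaA_apply)
      qed
    qed
  qed
qed

lemma prM_morph: "mc_morphism (Pr r A) A prM"
  unfolding mc_morphism_def
proof (intro conjI allI ballI)
  fix p q x assume "x \<in> car (Pr r A) p q" then show "prM p q x \<in> car A p q"
    unfolding prM_def by (rule car_Pr_Minus)
next
  fix p q show "lin_on (smul (Pr r A)) (smul A) (car (Pr r A) p q) (prM p q)"
    unfolding lin_on_def by (auto simp: prM_def)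
next
  fix i p q x assume x: "x \<in> car (Pr r A) p q"
  show "prM (p - int i) (q + 1 - int i) (dd (Pr r A) i p q x) = dd A i p q (prM p q x)"
    unfolding dd_Pr[OF mc x] prM_def by simp
qed

lemma zero_homotopy:
  assumes mcB: "multicomplex n' B"
  shows "r_homotopy r B B (\<lambda>p q x. x) (\<lambda>p q x. x) (\<lambda>m p q x. 0)"
  unfolding r_homotopy_def
proof (intro conjI allI ballI)
  fix m p q x show "0 \<in> car B (p - int m + int r) (q - int m + int r - 1)" by (rule car_zero[OF mcB])
next
  fix m p q show "lin_on (smul B) (smul B) (car B p q) (\<lambda>x. 0)"
    unfolding lin_on_def using smul_zero_vec[OF mcB] by simp
next
  fix m p q x assume "x \<in> car B p q"
  show "(\<Sum>i\<le>m. sgnf (i + r) (dd B i (p - int (m - i) + int r) (q - int (m - i) + int r - 1) 0) + sgnf i 0)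
     = (if m = r then x - x else 0)"
  proof -
    have "\<And>i. sgnf (i + r) (dd B i (p - int (m - i) + int r) (q - int (m - i) + int r - 1) 0) + sgnf i 0 = 0"
      by (simp only: mc_zero[OF mcB] sgnf_zero add_0)
    then have "(\<Sum>i\<le>m. sgnf (i + r) (dd B i (p - int (m - i) + int r) (q - int (m - i) + int r - 1) 0) + sgnf i 0) = 0"
      by (simp only: sum.neutral_const)
    then show ?thesis by simp
  qed
qed

lemma iota_homeq_prep:
  "r_homotopic r A A (\<lambda>p q x. prM p q (iotaA p q x)) (\<lambda>p q x. x)"
proof -
  have e: "(\<lambda>p q x. prM p q (iotaA p q x)) = (\<lambda>p q x. x)" by (simp add: prM_def iotaA_def fun_eq_iff)
  show ?thesis unfolding r_homotopic_def e by (rule exI[where x="\<lambda>m p q x. 0"], rule zero_homotopy[OF mc])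
qed

end



lemma Hh_pos_Diag: "0 < r \<Longrightarrow> Hh r m p q x (LDiag j) = (if j < r \<and> m < r \<and> j \<le> m then sgnf (r + 1) (x (LOff (j + r - 1 - m))) else 0)"
  by (simp add: Hh_def)
lemma Hh_pos_other: "0 < r \<Longrightarrow> (\<And>j. g \<noteq> LDiag j) \<Longrightarrow> Hh r m p q x g = 0"
  by (cases g) (auto simp: Hh_def)
lemma Hh_zero: "Hh 0 m p q x g = (if m = 0 \<and> g = LDiag 0 then x L01 else 0)"
  by (simp add: Hh_def)

lemma sgnf_opp: "odd (u + v) \<Longrightarrow> sgnf u z + sgnf v z = 0"
  by (auto simp: sgnf_def)

lemma sum_rev_atMost: "(\<Sum>i\<le>(m::nat). f (m - i)) = (\<Sum>i\<le>m. f i)"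
  using sum.atLeastAtMost_rev[of f 0 m] by (simp add: atMost_atLeast0)

context
  fixes n :: enat and A :: "('r::comm_ring_1, 'a::ab_group_add) mcx"
  assumes mc: "multicomplex n A"
begin

lemmas [simp] = car_zero[OF mc] mc_zero[OF mc] smul_zero_vec[OF mc]

lemma Hh_car:
  assumes x: "x \<in> car (Pr r A) p q"
  shows "Hh r m p q x \<in> car (Pr r A) (p - int m + int r) (q - int m + int r - 1)"
  unfolding car_Pr
proof (intro conjI ballI allI impI)
  fix b assume b: "b \<notin> lam_basis r"
  show "Hh r m p q x b = 0"
  proof (cases "r = 0")
    case True then show ?thesis using b by (auto simp: Hh_zero)
  next
    case False then show ?thesis using b by (cases b) (auto simp: Hh_def)
  qed
next
  fix b assume b: "b \<in> lam_basis r"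
  show "Hh r m p q x b \<in> car A (p - int m + int r - fst (lam_deg b)) (q - int m + int r - 1 - snd (lam_deg b))"
  proof (cases "r = 0")
    case True
    then show ?thesis using car_Pr_01[OF x True] by (auto simp: Hh_zero)
  next
    case False
    show ?thesis
    proof (cases "\<exists>j. b = LDiag j \<and> j < r \<and> m < r \<and> j \<le> m")
      case True
      then obtain j where j: "b = LDiag j" "j < r" "m < r" "j \<le> m" by blast
      have i: "j + r - 1 - m < r" using j by simp
      have "x (LOff (j + r - 1 - m)) \<in> car A (p + int (j + r - 1 - m) + 1) (q + int (j + r - 1 - m))"
        by (rule car_Pr_Off[OF x i])
      moreover have "int (j + r - 1 - m) = int j + int r - 1 - int m" using j by simp
      ultimately have "x (LOff (j + r - 1 - m)) \<in> car A (p - int m + int r - fst (lam_deg b)) (q - int m + int r - 1 - snd (lam_deg b))"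
        using j by (simp add: algebra_simps)
      then show ?thesis using j False by (simp add: Hh_pos_Diag car_sgnf[OF mc])
    next
      case nf: False
      have "Hh r m p q x b = 0"
      proof (cases b)
        case (LDiag j) then show ?thesis using nf False by (auto simp: Hh_pos_Diag)
      qed (use False in \<open>auto simp: Hh_def\<close>)
      then show ?thesis by simp
    qed
  qed
qed

lemma Hh_lin: "lin_on (smul (Pr r A)) (smul (Pr r A)) (car (Pr r A) p q) (Hh r m p q)"
  unfolding lin_on_def
proof (intro conjI ballI allI)
  fix x y assume x: "x \<in> car (Pr r A) p q" and y: "y \<in> car (Pr r A) p q"
  show "Hh r m p q (x + y) = Hh r m p q x + Hh r m p q y"
    by (rule ext) (auto simp: Hh_def sgnf_add split: lbasis.split)
next
  fix c x assume x: "x \<in> car (Pr r A) p q"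
  show "Hh r m p q (smul (Pr r A) c x) = smul (Pr r A) c (Hh r m p q x)"
  proof
    fix g
    show "Hh r m p q (smul (Pr r A) c x) g = smul (Pr r A) c (Hh r m p q x) g"
    proof (cases "r = 0")
      case True then show ?thesis by (simp add: Hh_zero)
    next
      case False
      show ?thesis
      proof (cases g)
        case (LDiag j)
        show ?thesis
        proof (cases "j < r \<and> m < r \<and> j \<le> m")
          case True
          have i: "j + r - 1 - m < r" using True by arith
          show ?thesis using False True LDiag smul_sgnf[OF mc car_Pr_Off[OF x i]]
            by (simp add: Hh_pos_Diag)
        next
          case nt: False then show ?thesis using False LDiag by (auto simp: Hh_pos_Diag)
        qed
      qed (use False in \<open>simp_all add: Hh_def\<close>)
    qed
  qed
qed

end



lemma sum_m1: "(\<Sum>i\<le>(m::nat). if m - i = 1 \<and> R i then f i else 0) = (if 1 \<le> m \<and> R (m - 1) then f (m - 1) else 0)"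
proof -
  have "(\<Sum>i\<le>m. if m - i = 1 \<and> R i then f i else 0) = (\<Sum>i\<le>m. if i = m - 1 then (if 1 \<le> m \<and> R i then f i else 0) else 0)"
    by (rule sum.cong[OF refl]) auto
  also have "\<dots> = (if 1 \<le> m \<and> R (m - 1) then f (m - 1) else 0)" by (simp add: sum.delta')
  finally show ?thesis .
qed

lemma sum_m0: "(\<Sum>i\<le>(m::nat). if m - i = 0 \<and> R i then f i else 0) = (if R m then f m else 0)"
proof -
  have "(\<Sum>i\<le>m. if m - i = 0 \<and> R i then f i else 0) = (\<Sum>i\<le>m. if i = m then (if R i then f i else 0) else 0)"
    by (rule sum.cong[OF refl]) auto
  also have "\<dots> = (if R m then f m else 0)" by (simp add: sum.delta')
  finally show ?thesis .
qed

context
  fixes n :: enat and A :: "('r::comm_ring_1, 'a::ab_group_add) mcx"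
  assumes mc: "multicomplex n A"
begin

lemmas [simp] = car_zero[OF mc] mc_zero[OF mc] smul_zero_vec[OF mc]

lemma Hh_rel_pos:
  assumes r: "0 < r" and x: "x \<in> car (Pr r A) p q"
  shows "(\<Sum>i\<le>m. sgnf (i + r) (dd (Pr r A) i (p - int (m - i) + int r) (q - int (m - i) + int r - 1) (Hh r (m - i) p q x))
               + sgnf i (Hh r i (p - int (m - i)) (q + 1 - int (m - i)) (dd (Pr r A) (m - i) p q x)))
        = (if m = r then x - iotaA p q (prM p q x) else 0)"
proof -
  define P where "P i = p - int (m - i) + int r" for i
  define Q where "Q i = q - int (m - i) + int r - 1" for i
  define K where "K i = Hh r (m - i) p q x" for i
  define Z where "Z i = prd r A (m - i) p q x" for i
  define s where "s = (sgnf (r + 1) :: 'a \<Rightarrow> 'a)"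
  have Kc: "K i \<in> car (Pr r A) (P i) (Q i)" for i unfolding K_def P_def Q_def by (rule Hh_car[OF mc x])
  have "(\<Sum>i\<le>m. sgnf (i + r) (dd (Pr r A) i (p - int (m - i) + int r) (q - int (m - i) + int r - 1) (Hh r (m - i) p q x))
               + sgnf i (Hh r i (p - int (m - i)) (q + 1 - int (m - i)) (dd (Pr r A) (m - i) p q x)))
     = (\<Sum>i\<le>m. sgnf (i + r) (prd r A i (P i) (Q i) (K i)) + sgnf i (Hh r i (p - int (m - i)) (q + 1 - int (m - i)) (Z i)))"
    unfolding P_def[symmetric] Q_def[symmetric] K_def[symmetric] Z_def
    by (rule sum.cong[OF refl]) (simp add: dd_Pr[OF mc Kc] dd_Pr[OF mc x])
  also have "\<dots> = (if m = r then x - iotaA p q (prM p q x) else 0)"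
  proof
    fix g
    have ev: "(\<Sum>i\<le>m. sgnf (i + r) (prd r A i (P i) (Q i) (K i)) + sgnf i (Hh r i (p - int (m - i)) (q + 1 - int (m - i)) (Z i))) g
       = (\<Sum>i\<le>m. sgnf (i + r) (prd r A i (P i) (Q i) (K i) g) + sgnf i (Hh r i (p - int (m - i)) (q + 1 - int (m - i)) (Z i) g))"
      by (simp add: sum_apply_fun sgnf_fun)
    have "(\<Sum>i\<le>m. sgnf (i + r) (prd r A i (P i) (Q i) (K i) g) + sgnf i (Hh r i (p - int (m - i)) (q + 1 - int (m - i)) (Z i) g))
        = (if m = r then x g - iotaA p q (x LMinus) g else 0)"
    proof (cases "g \<in> lam_basis r")
      case False
      have "g \<noteq> LMinus \<and> g \<noteq> LDiag 0" using False by auto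
      moreover have "Hh r i p' q' z g = 0" for i p' q' and z :: "lbasis \<Rightarrow> 'a"
      proof (cases g)
        case (LDiag j) then show ?thesis using False r by (simp add: Hh_pos_Diag)
      qed (use r in \<open>simp_all add: Hh_pos_other\<close>)
      ultimately show ?thesis using False car_Pr_out[OF x False] by (simp add: prd_out iotaA_apply)
    next
      case b: True
      show ?thesis
      proof (cases g)
        case LMinus
        have "K i LMinus = 0" "Hh r i p' q' z LMinus = 0" for i p' q' and z :: "lbasis \<Rightarrow> 'a"
          unfolding K_def using r by (simp_all add: Hh_pos_other)
        then show ?thesis using LMinus by (simp add: iotaA_apply)
      next
        case (LDiag j)
        with b r have j: "j < r" by auto
        define c where "c (i::nat) = j + r - 1 - i" for i
        define F where "F i = sgnf (i + r) (prd r A i (P i) (Q i) (K i) (LDiag j))" for i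
        define G where "G i = sgnf i (Hh r i (p - int (m - i)) (q + 1 - int (m - i)) (Z i) (LDiag j))" for i
        define G1 where "G1 i = (if m - i = 1 \<and> (i < r \<and> j \<le> i) then sgnf i (s (x (LDiag (c i)) - (if c i = 0 then x LMinus else 0))) else 0)" for i
        define G2 where "G2 i = (if m - i = 0 \<and> (i < r \<and> j \<le> i \<and> c i + 1 < r) then sgnf i (s (x (LDiag (c i + 1)))) else 0)" for i
        define G3 where "G3 i = (if i < r \<and> j \<le> i then sgnf i (s (sgnf (m - i + c i) (dd A (m - i) (p + int (c i) + 1) (q + int (c i)) (x (LOff (c i)))))) else 0)" for i
        have Gi: "G i = G1 i + G2 i + G3 i" for i
        proof (cases "i < r \<and> j \<le> i")
          case True
          then have ci: "c i < r" unfolding c_def by arith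
          have "G i = sgnf i (s (Z i (LOff (c i))))"
            unfolding G_def using True r by (simp add: Hh_pos_Diag c_def s_def)
          also have "\<dots> = G1 i + G2 i + G3 i"
            unfolding Z_def prd_Off[OF ci] s_def G1_def G2_def G3_def using True
            by (simp add: sgnf_add)
          finally show ?thesis .
        next
          case False
          then show ?thesis unfolding G_def G1_def G2_def G3_def using r by (auto simp: Hh_pos_Diag)
        qed
        have FG: "F i + G3 (m - i) = 0" if im: "i \<le> m" for i
        proof (cases "m - i < r \<and> j \<le> m - i")
          case True
          let ?c = "c (m - i)"
          have cr: "?c < r" unfolding c_def using True by arith
          have xO: "x (LOff ?c) \<in> car A (p + int ?c + 1) (q + int ?c)" by (rule car_Pr_Off[OF x cr])
          have ic: "int ?c = int j + int r - 1 - int (m - i)" unfolding c_def using True by simp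
          have e1: "P i + int j = p + int ?c + 1" "Q i + int j = q + int ?c" unfolding P_def Q_def ic by simp_all
          have e2: "m - (m - i) = i" using im by simp
          have Kd: "K i (LDiag j) = s (x (LOff ?c))"
            unfolding K_def s_def c_def using True j r by (simp add: Hh_pos_Diag)
          let ?X = "dd A i (p + int ?c + 1) (q + int ?c) (x (LOff ?c))"
          have "F i = sgnf (i + r) (sgnf j (s ?X))"
            unfolding F_def prd_Diag[of j r, OF disjI2[OF j]] Kd e1 s_def using mc_sgnf[OF mc xO] by simp
          also have "\<dots> = sgnf (i + r + (j + (r + 1))) ?X" unfolding s_def by (simp only: sgnf_sgnf)
          finally have Fe: "F i = sgnf (i + r + (j + (r + 1))) ?X" .
          have "G3 (m - i) = sgnf (m - i) (s (sgnf (i + ?c) ?X))"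
            unfolding G3_def e2 using True by simp
          also have "\<dots> = sgnf (m - i + (r + 1 + (i + ?c))) ?X" unfolding s_def by (simp only: sgnf_sgnf)
          finally have Ge: "G3 (m - i) = sgnf (m - i + (r + 1 + (i + ?c))) ?X" .
          have h: "m - i + (r + 1 + (i + ?c)) = 2 * r + i + j" unfolding c_def using True im by arith
          have eq: "i + r + (j + (r + 1)) + (m - i + (r + 1 + (i + ?c))) = 2 * (i + 2 * r + j) + 1"
            unfolding h by arith
          have o: "odd (2 * (i + 2 * r + j) + (1::nat))" by simp
          have "odd (i + r + (j + (r + 1)) + (m - i + (r + 1 + (i + ?c))))" unfolding eq by (rule o)
          then show ?thesis unfolding Fe Ge by (rule sgnf_opp)
        next
          case False
          have "K i (LDiag j) = 0" unfolding K_def using False r by (auto simp: Hh_pos_Diag)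
          then have "F i = 0" unfolding F_def using j by (simp add: prd_Diag)
          moreover have "G3 (m - i) = 0" unfolding G3_def using False by auto
          ultimately show ?thesis by simp
        qed
        have "(\<Sum>i\<le>m. sgnf (i + r) (prd r A i (P i) (Q i) (K i) g) + sgnf i (Hh r i (p - int (m - i)) (q + 1 - int (m - i)) (Z i) g))
           = (\<Sum>i\<le>m. F i + G i)" unfolding F_def G_def LDiag ..
        also have "\<dots> = (\<Sum>i\<le>m. F i) + (\<Sum>i\<le>m. G3 i) + (sum G1 {..m} + sum G2 {..m})"
        proof -
          have "(\<Sum>i\<le>m. F i + G i) = (\<Sum>i\<le>m. F i + G3 i + (G1 i + G2 i))"
            by (rule sum.cong[OF refl]) (simp add: Gi add.commute add.left_commute)
          then show ?thesis by (simp only: sum.distrib)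
        qed
        also have "(\<Sum>i\<le>m. G3 i) = (\<Sum>i\<le>m. G3 (m - i))" by (rule sum_rev_atMost[symmetric])
        also have "(\<Sum>i\<le>m. F i) + (\<Sum>i\<le>m. G3 (m - i)) = 0"
          using FG by (simp add: sum.distrib[symmetric])
        also have "sum G1 {..m} = (if 1 \<le> m \<and> (m - 1 < r \<and> j \<le> m - 1) then sgnf (m - 1) (s (x (LDiag (c (m - 1))) - (if c (m - 1) = 0 then x LMinus else 0))) else 0)"
          unfolding G1_def by (rule sum_m1)
        also have "sum G2 {..m} = (if m < r \<and> j \<le> m \<and> c m + 1 < r then sgnf m (s (x (LDiag (c m + 1)))) else 0)"
          unfolding G2_def by (rule sum_m0)
        also have "0 + ((if 1 \<le> m \<and> (m - 1 < r \<and> j \<le> m - 1) then sgnf (m - 1) (s (x (LDiag (c (m - 1))) - (if c (m - 1) = 0 then x LMinus else 0))) else 0)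
            + (if m < r \<and> j \<le> m \<and> c m + 1 < r then sgnf m (s (x (LDiag (c m + 1)))) else 0))
           = (if m = r then x g - iotaA p q (x LMinus) g else 0)"
        proof -
          consider "m = r" | "m < r" | "r < m" by arith
          then show ?thesis
          proof cases
            case 1
            have c1: "c (m - 1) = j" unfolding c_def using 1 r by simp
            have "sgnf (m - 1) (s z) = z" for z unfolding s_def using 1 r by (simp add: sgnf_sgnf sgnf_even)
            then show ?thesis using 1 r j c1 LDiag by (auto simp: iotaA_apply)
          next
            case 2
            show ?thesis
            proof (cases "j < m")
              case True
              have c1: "c (m - 1) = j + r - m" "c m + 1 = j + r - m" unfolding c_def using True 2 by arith+
              have "sgnf (m - 1) (s (x (LDiag (j + r - m)))) + sgnf m (s (x (LDiag (j + r - m)))) = 0"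
              proof (rule sgnf_opp)
                have eq: "m - 1 + m = 2 * (m - 1) + 1" using True by arith
                have o: "odd (2 * (m - 1) + (1::nat))" by simp
                show "odd (m - 1 + m)" unfolding eq by (rule o)
              qed
              then show ?thesis using 2 True c1 by auto
            next
              case False
              have "\<not> (c m + 1 < r)" if "j \<le> m" unfolding c_def using False that 2 by arith
              then show ?thesis using 2 False by auto
            qed
          next
            case 3
            then show ?thesis by auto
          qed
        qed
        finally show ?thesis .
      next
        case (LOff a)
        with b have a: "a < r" by simp
        have K0: "K i LMinus = 0" "K i (LOff a) = 0" for i unfolding K_def using r by (simp_all add: Hh_pos_other)
        have H0: "Hh r i p' q' z (LOff a) = 0" for i p' q' and z :: "lbasis \<Rightarrow> 'a" using r by (simp add: Hh_pos_other)
        define E1 where "E1 (i::nat) = (if i = 1 then sgnf (1 + r) (K 1 (LDiag a)) else 0)" for i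
        define E2 where "E2 (i::nat) = (if i = 0 then (if a + 1 < r then sgnf r (K 0 (LDiag (a + 1))) else 0) else 0)" for i
        have "(\<Sum>i\<le>m. sgnf (i + r) (prd r A i (P i) (Q i) (K i) g) + sgnf i (Hh r i (p - int (m - i)) (q + 1 - int (m - i)) (Z i) g))
           = (\<Sum>i\<le>m. E1 i + E2 i)"
          by (rule sum.cong[OF refl]) (auto simp: LOff prd_Off[OF a] K0 H0 E1_def E2_def)
        also have "\<dots> = (if 1 \<le> m then sgnf (1 + r) (K 1 (LDiag a)) else 0)
             + (if a + 1 < r then sgnf r (K 0 (LDiag (a + 1))) else 0)"
          by (simp add: sum.distrib E1_def E2_def sum.delta')
        also have "\<dots> = (if m = r then x g - iotaA p q (x LMinus) g else 0)"
        proof -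
          have k1: "K 1 (LDiag a) = (if 1 \<le> m \<and> m - 1 < r \<and> a \<le> m - 1 then s (x (LOff (a + r - m))) else 0)" if "1 \<le> m"
            unfolding K_def s_def using r a that by (auto simp: Hh_pos_Diag)
          have k0: "K 0 (LDiag (a + 1)) = (if a + 1 < r \<and> m < r \<and> a + 1 \<le> m then s (x (LOff (a + r - m))) else 0)"
            unfolding K_def s_def using r a by (auto simp: Hh_pos_Diag)
          consider "m = r" | "m < r" | "r < m" by arith
          then show ?thesis
          proof cases
            case 1
            then have "K 1 (LDiag a) = s (x (LOff a))" using k1 a r by auto
            moreover have "sgnf (1 + r) (s z) = z" for z unfolding s_def by (simp add: sgnf_sgnf sgnf_even)
            ultimately show ?thesis using 1 k0 r LOff by (simp add: iotaA_apply)
          next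
            case 2
            show ?thesis
            proof (cases "a < m")
              case True
              then have "(if 1 \<le> m then sgnf (1 + r) (K 1 (LDiag a)) else 0) + (if a + 1 < r then sgnf r (K 0 (LDiag (a + 1))) else 0)
                 = sgnf (1 + r) (s (x (LOff (a + r - m)))) + sgnf r (s (x (LOff (a + r - m))))"
                using k1 k0 2 by auto
              also have "\<dots> = 0" by (rule sgnf_opp) simp
              finally show ?thesis using 2 by simp
            next
              case False
              then show ?thesis using k1 k0 2 by auto
            qed
          next
            case 3
            then show ?thesis using k1 k0 by auto
          qed
        qed
        finally show ?thesis .
      next
        case L01 with b r show ?thesis by simp
      qed
    qed
    then show "(\<Sum>i\<le>m. sgnf (i + r) (prd r A i (P i) (Q i) (K i)) + sgnf i (Hh r i (p - int (m - i)) (q + 1 - int (m - i)) (Z i))) g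
       = (if m = r then x - iotaA p q (prM p q x) else 0) g" using ev by (simp add: prM_def)
  qed
  finally show ?thesis .
qed

end



context
  fixes n :: enat and A :: "('r::comm_ring_1, 'a::ab_group_add) mcx"
  assumes mc: "multicomplex n A"
begin

lemmas [simp] = car_zero[OF mc] mc_zero[OF mc] smul_zero_vec[OF mc]

lemma Hh_rel_zero:
  assumes r: "r = 0" and x: "x \<in> car (Pr r A) p q"
  shows "(\<Sum>i\<le>m. sgnf (i + r) (dd (Pr r A) i (p - int (m - i) + int r) (q - int (m - i) + int r - 1) (Hh r (m - i) p q x))
               + sgnf i (Hh r i (p - int (m - i)) (q + 1 - int (m - i)) (dd (Pr r A) (m - i) p q x)))
        = (if m = r then x - iotaA p q (prM p q x) else 0)"
proof -
  define P where "P i = p - int (m - i) + int r" for i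
  define Q where "Q i = q - int (m - i) + int r - 1" for i
  define K where "K i = Hh r (m - i) p q x" for i
  define Z where "Z i = prd r A (m - i) p q x" for i
  have Kc: "K i \<in> car (Pr r A) (P i) (Q i)" for i unfolding K_def P_def Q_def by (rule Hh_car[OF mc x])
  have "(\<Sum>i\<le>m. sgnf (i + r) (dd (Pr r A) i (p - int (m - i) + int r) (q - int (m - i) + int r - 1) (Hh r (m - i) p q x))
               + sgnf i (Hh r i (p - int (m - i)) (q + 1 - int (m - i)) (dd (Pr r A) (m - i) p q x)))
     = (\<Sum>i\<le>m. sgnf (i + r) (prd r A i (P i) (Q i) (K i)) + sgnf i (Hh r i (p - int (m - i)) (q + 1 - int (m - i)) (Z i)))"
    unfolding P_def[symmetric] Q_def[symmetric] K_def[symmetric] Z_def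
    by (rule sum.cong[OF refl]) (simp add: dd_Pr[OF mc Kc] dd_Pr[OF mc x])
  also have "\<dots> = (if m = r then x - iotaA p q (prM p q x) else 0)"
  proof
    fix g
    have ev: "(\<Sum>i\<le>m. sgnf (i + r) (prd r A i (P i) (Q i) (K i)) + sgnf i (Hh r i (p - int (m - i)) (q + 1 - int (m - i)) (Z i))) g
       = (\<Sum>i\<le>m. sgnf (i + r) (prd r A i (P i) (Q i) (K i) g) + sgnf i (Hh r i (p - int (m - i)) (q + 1 - int (m - i)) (Z i) g))"
      by (simp add: sum_apply_fun sgnf_fun)
    have "(\<Sum>i\<le>m. sgnf (i + r) (prd r A i (P i) (Q i) (K i) g) + sgnf i (Hh r i (p - int (m - i)) (q + 1 - int (m - i)) (Z i) g))
        = (if m = r then x g - iotaA p q (x LMinus) g else 0)"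
    proof (cases "g \<in> lam_basis r")
      case False
      have "g \<noteq> LMinus \<and> g \<noteq> LDiag 0" using False by auto
      moreover have "Hh r i p' q' z g = 0" for i p' q' and z :: "lbasis \<Rightarrow> 'a"
        using False r by (auto simp: Hh_zero)
      ultimately show ?thesis using False car_Pr_out[OF x False] by (simp add: prd_out iotaA_apply)
    next
      case b: True
      show ?thesis
      proof (cases g)
        case LMinus
        have "K i LMinus = 0" "Hh r i p' q' z LMinus = 0" for i p' q' and z :: "lbasis \<Rightarrow> 'a"
          unfolding K_def using r by (simp_all add: Hh_zero)
        then show ?thesis using LMinus by (simp add: iotaA_apply)
      next
        case (LDiag j)
        with b r have j: "j = 0" by simp
        have xO: "x L01 \<in> car A p (q - 1)" by (rule car_Pr_01[OF x r])
        define F where "F (i::nat) = (if i = m then sgnf m (dd A m p (q - 1) (x L01)) else 0)" for i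
        define G where "G (i::nat) = (if i = 0 then (if m = 0 then x (LDiag 0) - x LMinus else 0) + sgnf (m + 1) (dd A m p (q - 1) (x L01)) else 0)" for i
        have "(\<Sum>i\<le>m. sgnf (i + r) (prd r A i (P i) (Q i) (K i) g) + sgnf i (Hh r i (p - int (m - i)) (q + 1 - int (m - i)) (Z i) g))
           = (\<Sum>i\<le>m. F i + G i)"
        proof (rule sum.cong[OF refl])
          fix i assume i: "i \<in> {..m}"
          have f: "sgnf (i + r) (prd r A i (P i) (Q i) (K i) g) = F i"
          proof (cases "i = m")
            case True
            have e: "P m = p" "Q m = q - 1" unfolding P_def Q_def using True r by simp_all
            show ?thesis unfolding LDiag j using True r by (simp add: prd_Diag e K_def Hh_zero F_def)
          next
            case False
            then have "K i (LDiag 0) = 0" unfolding K_def using r i by (auto simp: Hh_zero)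
            then show ?thesis unfolding LDiag j using False r by (simp add: prd_Diag F_def)
          qed
          have gg: "sgnf i (Hh r i (p - int (m - i)) (q + 1 - int (m - i)) (Z i) g) = G i"
            unfolding LDiag j using r by (auto simp: Hh_zero G_def Z_def prd_01)
          show "sgnf (i + r) (prd r A i (P i) (Q i) (K i) g) + sgnf i (Hh r i (p - int (m - i)) (q + 1 - int (m - i)) (Z i) g) = F i + G i"
            using f gg by simp
        qed
        also have "\<dots> = sgnf m (dd A m p (q - 1) (x L01)) + ((if m = 0 then x (LDiag 0) - x LMinus else 0) + sgnf (m + 1) (dd A m p (q - 1) (x L01)))"
          by (simp add: sum.distrib F_def G_def sum.delta')
        also have "\<dots> = (if m = 0 then x (LDiag 0) - x LMinus else 0)"
          by (simp add: sgnf_Suc)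
        also have "\<dots> = (if m = r then x g - iotaA p q (x LMinus) g else 0)"
          using r LDiag j by (simp add: iotaA_apply)
        finally show ?thesis .
      next
        case (LOff a) with b r show ?thesis by simp
      next
        case L01
        define F where "F (i::nat) = (if i = 0 then (if m = 0 then x L01 else 0) else 0)" for i
        have "(\<Sum>i\<le>m. sgnf (i + r) (prd r A i (P i) (Q i) (K i) g) + sgnf i (Hh r i (p - int (m - i)) (q + 1 - int (m - i)) (Z i) g))
           = (\<Sum>i\<le>m. F i)"
        proof (rule sum.cong[OF refl])
          fix i assume i: "i \<in> {..m}"
          have "K i L01 = 0" "K i LMinus = 0" for i unfolding K_def using r by (simp_all add: Hh_zero)
          moreover have "K 0 (LDiag 0) = (if m = 0 then x L01 else 0)" unfolding K_def using r by (simp add: Hh_zero)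
          ultimately show "sgnf (i + r) (prd r A i (P i) (Q i) (K i) g) + sgnf i (Hh r i (p - int (m - i)) (q + 1 - int (m - i)) (Z i) g) = F i"
            unfolding L01 using r by (simp add: prd_01 Hh_zero F_def)
        qed
        also have "\<dots> = (if m = r then x g - iotaA p q (x LMinus) g else 0)"
          using r L01 by (simp add: F_def sum.delta' iotaA_apply)
        finally show ?thesis .
      qed
    qed
    then show "(\<Sum>i\<le>m. sgnf (i + r) (prd r A i (P i) (Q i) (K i)) + sgnf i (Hh r i (p - int (m - i)) (q + 1 - int (m - i)) (Z i))) g
       = (if m = r then x - iotaA p q (prM p q x) else 0) g" using ev by (simp add: prM_def)
  qed
  finally show ?thesis .
qed

lemma Hh_homotopy:
  "r_homotopy r (Pr r A) (Pr r A) (\<lambda>p q y. iotaA p q (prM p q y)) (\<lambda>p q y. y) (Hh r)"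
  unfolding r_homotopy_def
proof (intro conjI allI ballI)
  fix m p q x assume "x \<in> car (Pr r A) p q"
  then show "Hh r m p q x \<in> car (Pr r A) (p - int m + int r) (q - int m + int r - 1)" by (rule Hh_car[OF mc])
next
  fix m p q show "lin_on (smul (Pr r A)) (smul (Pr r A)) (car (Pr r A) p q) (Hh r m p q)" by (rule Hh_lin[OF mc])
next
  fix m p q x assume x: "x \<in> car (Pr r A) p q"
  show "(\<Sum>i\<le>m. sgnf (i + r) (dd (Pr r A) i (p - int (m - i) + int r) (q - int (m - i) + int r - 1) (Hh r (m - i) p q x))
               + sgnf i (Hh r i (p - int (m - i)) (q + 1 - int (m - i)) (dd (Pr r A) (m - i) p q x)))
        = (if m = r then x - iotaA p q (prM p q x) else 0)"
  proof (cases "r = 0")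
    case True then show ?thesis by (rule Hh_rel_zero[OF _ x])
  next
    case False then show ?thesis by (intro Hh_rel_pos[OF mc _ x]) simp
  qed
qed

lemma iota_heq: "r_homotopy_equivalence r A (Pr r A) iotaA"
  unfolding r_homotopy_equivalence_def r_homotopic_def
  using iota_morph[OF mc] prM_morph[OF mc] Hh_homotopy iota_homeq_prep[OF mc]
  unfolding r_homotopic_def by blast

end



lemma sum_triangle_swap: "(\<Sum>i\<le>l. \<Sum>j\<le>l - i. F i j) = (\<Sum>j\<le>(l::nat). \<Sum>i\<le>l - j. F i j)"
proof -
  have "(\<Sum>i\<le>l. \<Sum>j\<le>l - i. F i j) = (\<Sum>i\<in>{..l}. \<Sum>j\<in>{j. j \<in> {..l} \<and> i + j \<le> l}. F i j)"
    by (rule sum.cong[OF refl], rule sum.cong) auto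
  also have "\<dots> = (\<Sum>j\<in>{..l}. \<Sum>i\<in>{i. i \<in> {..l} \<and> i + j \<le> l}. F i j)"
    by (rule sum.swap_restrict) auto
  also have "\<dots> = (\<Sum>j\<le>l. \<Sum>i\<le>l - j. F i j)"
    by (rule sum.cong[OF refl], rule sum.cong) auto
  finally show ?thesis .
qed

lemma hom_Br:
  assumes mA: "multicomplex nA A" and mB: "multicomplex nB B"
    and H: "r_homotopy r A B f g h"
    and x: "x \<in> Zr A (Suc r) p q"
  shows "g p q x - f p q x \<in> Br B (Suc r) p q"
proof -
  have hc: "\<And>m p q z. z \<in> car A p q \<Longrightarrow> h m p q z \<in> car B (p - int m + int r) (q - int m + int r - 1)"
    using H unfolding r_homotopy_def by blast
  have hl: "\<And>m p q. lin_on (smul A) (smul B) (car A p q) (h m p q)"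
    using H unfolding r_homotopy_def by blast
  have hr: "\<And>m p q z. z \<in> car A p q \<Longrightarrow> (\<Sum>i\<le>m. sgnf (i + r) (dd B i (p - int (m - i) + int r) (q - int (m - i) + int r - 1)
                                   (h (m - i) p q z))
               + sgnf i (h i (p - int (m - i)) (q + 1 - int (m - i)) (dd A (m - i) p q z)))
        = (if m = r then g p q z - f p q z else 0)"
    using H unfolding r_homotopy_def by blast
  from x obtain a where a0: "a 0 = x" and xc: "x \<in> car A p q"
    and aj: "\<And>j. 1 \<le> j \<and> j < Suc r \<Longrightarrow> a j \<in> car A (p - int j) (q - int j)"
    and arel: "\<And>l. l < Suc r \<Longrightarrow> (\<Sum>j\<le>l. sgnf (l - j) (dd A (l - j) (p - int j) (q - int j) (a j))) = 0"
    unfolding Zr_def by blast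
  have ac: "a j \<in> car A (p - int j) (q - int j)" if "j \<le> r" for j
    using aj[of j] that a0 xc by (cases "j = 0") auto
  define b where "b k = (\<Sum>j\<le>k. sgnf (j + r) (h (k - j) (p - int j) (q - int j) (a j)))" for k
  have hcj: "h (k - j) (p - int j) (q - int j) (a j) \<in> car B (p + int (Suc r) - 1 - int k) (q + int (Suc r) - 2 - int k)"
    if "j \<le> k" "k \<le> r" for j k
    by (rule car_cong[OF hc[OF ac]]) (use that in simp_all)
  have bc: "b k \<in> car B (p + int (Suc r) - 1 - int k) (q + int (Suc r) - 2 - int k)" if "k \<le> r" for k
    unfolding b_def by (rule car_sum[OF mB], rule car_sgnf[OF mB], rule hcj) (use that in auto)
  define PI where "PI l i = p + int (Suc r) - 1 - int (l - i)" for l i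
  define QI where "QI l i = q + int (Suc r) - 2 - int (l - i)" for l i
  have T: "(\<Sum>i\<le>l. sgnf i (dd B i (PI l i) (QI l i) (b (l - i)))) = (if l = r then g p q x - f p q x else 0)"
    if lr: "l \<le> r" for l
  proof -
    have s1: "(\<Sum>i\<le>l. sgnf i (dd B i (PI l i) (QI l i) (b (l - i))))
       = (\<Sum>i\<le>l. \<Sum>j\<le>l - i. sgnf i (sgnf (j + r) (dd B i (PI l i) (QI l i) (h (l - i - j) (p - int j) (q - int j) (a j)))))"
    proof (rule sum.cong[OF refl])
      fix i assume i: "i \<in> {..l}"
      have mem: "h (l - i - j) (p - int j) (q - int j) (a j) \<in> car B (PI l i) (QI l i)" if "j \<in> {..l - i}" for j
        unfolding PI_def QI_def by (rule hcj) (use that i lr in auto)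
      show "sgnf i (dd B i (PI l i) (QI l i) (b (l - i))) =
          (\<Sum>j\<le>l - i. sgnf i (sgnf (j + r) (dd B i (PI l i) (QI l i) (h (l - i - j) (p - int j) (q - int j) (a j)))))"
      proof -
        have e1: "dd B i (PI l i) (QI l i) (b (l - i)) = (\<Sum>j\<le>l - i. dd B i (PI l i) (QI l i) (sgnf (j + r) (h (l - i - j) (p - int j) (q - int j) (a j))))"
          unfolding b_def by (rule mc_sum[OF mB], rule car_sgnf[OF mB], rule mem) simp
        have e2: "\<dots> = (\<Sum>j\<le>l - i. sgnf (j + r) (dd B i (PI l i) (QI l i) (h (l - i - j) (p - int j) (q - int j) (a j))))"
          by (rule sum.cong[OF refl], rule mc_sgnf[OF mB mem]) simp
        show ?thesis by (simp only: e1 e2 sgnf_sum)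
      qed
    qed
    also have "\<dots> = (\<Sum>j\<le>l. \<Sum>i\<le>l - j. sgnf i (sgnf (j + r) (dd B i (PI l i) (QI l i) (h (l - j - i) (p - int j) (q - int j) (a j)))))"
      by (subst sum_triangle_swap) (simp add: add.commute)
    also have "\<dots> = (\<Sum>j\<le>l. sgnf j ((if l - j = r then g (p - int j) (q - int j) (a j) - f (p - int j) (q - int j) (a j) else 0)
         - (\<Sum>i\<le>l - j. sgnf i (h i (p - int j - int (l - j - i)) (q - int j + 1 - int (l - j - i)) (dd A (l - j - i) (p - int j) (q - int j) (a j))))))"
    proof (rule sum.cong[OF refl])
      fix j assume j: "j \<in> {..l}"
      let ?M = "l - j"
      have ajc: "a j \<in> car A (p - int j) (q - int j)" using j lr ac by auto
      have R: "(\<Sum>i\<le>?M. sgnf (i + r) (dd B i (p - int j - int (?M - i) + int r) (q - int j - int (?M - i) + int r - 1)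
                                   (h (?M - i) (p - int j) (q - int j) (a j)))
               + sgnf i (h i (p - int j - int (?M - i)) (q - int j + 1 - int (?M - i)) (dd A (?M - i) (p - int j) (q - int j) (a j))))
        = (if ?M = r then g (p - int j) (q - int j) (a j) - f (p - int j) (q - int j) (a j) else 0)"
        by (rule hr[OF ajc])
      have ie: "p - int j - int (?M - i) + int r = PI l i" "q - int j - int (?M - i) + int r - 1 = QI l i"
        if "i \<le> ?M" for i unfolding PI_def QI_def using that j by auto
      define X where "X i = dd B i (PI l i) (QI l i) (h (?M - i) (p - int j) (q - int j) (a j))" for i
      define Y where "Y i = sgnf i (h i (p - int j - int (?M - i)) (q - int j + 1 - int (?M - i)) (dd A (?M - i) (p - int j) (q - int j) (a j)))" for i
      have R2: "(\<Sum>i\<le>?M. sgnf (i + r) (X i)) + (\<Sum>i\<le>?M. Y i) = (if ?M = r then g (p - int j) (q - int j) (a j) - f (p - int j) (q - int j) (a j) else 0)"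
      proof -
        have "(\<Sum>i\<le>?M. sgnf (i + r) (X i) + Y i) = (if ?M = r then g (p - int j) (q - int j) (a j) - f (p - int j) (q - int j) (a j) else 0)"
          unfolding R[symmetric] X_def Y_def by (rule sum.cong[OF refl]) (use j in \<open>auto simp: PI_def QI_def of_nat_diff algebra_simps\<close>)
        then show ?thesis by (simp add: sum.distrib)
      qed
      have "(\<Sum>i\<le>?M. sgnf i (sgnf (j + r) (X i))) = sgnf j (\<Sum>i\<le>?M. sgnf (i + r) (X i))"
        by (simp add: sgnf_sum sgnf_sgnf algebra_simps)
      also have "(\<Sum>i\<le>?M. sgnf (i + r) (X i)) = (if ?M = r then g (p - int j) (q - int j) (a j) - f (p - int j) (q - int j) (a j) else 0) - (\<Sum>i\<le>?M. Y i)"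
      proof -
        have "(\<Sum>i\<le>?M. sgnf (i + r) (X i)) = ((\<Sum>i\<le>?M. sgnf (i + r) (X i)) + (\<Sum>i\<le>?M. Y i)) - (\<Sum>i\<le>?M. Y i)"
          by (rule add_diff_cancel_right'[symmetric])
        then show ?thesis unfolding R2 .
      qed
      finally show "(\<Sum>i\<le>l - j. sgnf i (sgnf (j + r) (dd B i (PI l i) (QI l i) (h (l - j - i) (p - int j) (q - int j) (a j))))) =
          sgnf j ((if l - j = r then g (p - int j) (q - int j) (a j) - f (p - int j) (q - int j) (a j) else 0)
         - (\<Sum>i\<le>l - j. sgnf i (h i (p - int j - int (l - j - i)) (q - int j + 1 - int (l - j - i)) (dd A (l - j - i) (p - int j) (q - int j) (a j)))))"
        unfolding X_def Y_def .
    qed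
    also have "\<dots> = (\<Sum>j\<le>l. sgnf j (if l - j = r then g (p - int j) (q - int j) (a j) - f (p - int j) (q - int j) (a j) else 0))
         - (\<Sum>j\<le>l. \<Sum>i\<le>l - j. sgnf j (sgnf i (h i (p - int j - int (l - j - i)) (q - int j + 1 - int (l - j - i)) (dd A (l - j - i) (p - int j) (q - int j) (a j)))))"
      by (simp add: sgnf_diff sum_subtractf sgnf_sum)
    also have "(\<Sum>j\<le>l. sgnf j (if l - j = r then g (p - int j) (q - int j) (a j) - f (p - int j) (q - int j) (a j) else 0))
       = (if l = r then g p q x - f p q x else 0)"
    proof -
      have "(\<Sum>j\<le>l. sgnf j (if l - j = r then g (p - int j) (q - int j) (a j) - f (p - int j) (q - int j) (a j) else 0))
         = (\<Sum>j\<le>l. if j = 0 then (if l = r then g p q x - f p q x else 0) else 0)"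
        by (rule sum.cong[OF refl]) (use lr a0 in auto)
      then show ?thesis by (simp add: sum.delta')
    qed
    also have "(\<Sum>j\<le>l. \<Sum>i\<le>l - j. sgnf j (sgnf i (h i (p - int j - int (l - j - i)) (q - int j + 1 - int (l - j - i)) (dd A (l - j - i) (p - int j) (q - int j) (a j)))))
       = 0"
    proof -
      have "(\<Sum>j\<le>l. \<Sum>i\<le>l - j. sgnf j (sgnf i (h i (p - int j - int (l - j - i)) (q - int j + 1 - int (l - j - i)) (dd A (l - j - i) (p - int j) (q - int j) (a j)))))
        = (\<Sum>i\<le>l. \<Sum>j\<le>l - i. sgnf j (sgnf i (h i (p - int j - int (l - j - i)) (q - int j + 1 - int (l - j - i)) (dd A (l - j - i) (p - int j) (q - int j) (a j)))))"
        by (rule sum_triangle_swap[symmetric])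
      also have "\<dots> = (\<Sum>i\<le>l. 0)"
      proof (rule sum.cong[OF refl])
        fix i assume i: "i \<in> {..l}"
        let ?L = "l - i"
        have mem: "dd A (l - j - i) (p - int j) (q - int j) (a j) \<in> car A (p - int ?L) (q + 1 - int ?L)" if "j \<le> ?L" for j
          by (rule car_cong[OF mc_car[OF mA ac]]) (use that i lr in auto)
        have ie: "h i (p - int j - int (l - j - i)) (q - int j + 1 - int (l - j - i)) = h i (p - int ?L) (q + 1 - int ?L)"
          if "j \<le> ?L" for j using that i by (simp add: of_nat_diff algebra_simps)
        have st1: "sgnf j (sgnf i (h i (p - int j - int (l - j - i)) (q - int j + 1 - int (l - j - i)) (dd A (l - j - i) (p - int j) (q - int j) (a j))))
           = sgnf i (h i (p - int ?L) (q + 1 - int ?L) (sgnf j (dd A (l - j - i) (p - int j) (q - int j) (a j))))"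
          if jL: "j \<in> {..?L}" for j
        proof -
          have jL': "j \<le> ?L" using jL by simp
          show ?thesis
            unfolding ie[OF jL'] lin_sgnf[OF mc_rm[OF mA] hl mem[OF jL']] sgnf_sgnf by (simp only: add.commute)
        qed
        have "(\<Sum>j\<le>?L. sgnf j (sgnf i (h i (p - int j - int (l - j - i)) (q - int j + 1 - int (l - j - i)) (dd A (l - j - i) (p - int j) (q - int j) (a j)))))
          = (\<Sum>j\<le>?L. sgnf i (h i (p - int ?L) (q + 1 - int ?L) (sgnf j (dd A (l - j - i) (p - int j) (q - int j) (a j)))))"
          by (rule sum.cong[OF refl]) (rule st1)
        also have "\<dots> = sgnf i (\<Sum>j\<le>?L. h i (p - int ?L) (q + 1 - int ?L) (sgnf j (dd A (l - j - i) (p - int j) (q - int j) (a j))))"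
          by (simp only: sgnf_sum)
        also have "(\<Sum>j\<le>?L. h i (p - int ?L) (q + 1 - int ?L) (sgnf j (dd A (l - j - i) (p - int j) (q - int j) (a j))))
           = h i (p - int ?L) (q + 1 - int ?L) (\<Sum>j\<le>?L. sgnf j (dd A (l - j - i) (p - int j) (q - int j) (a j)))"
          by (rule lin_sum[OF mc_rm[OF mA] hl, symmetric]) (rule car_sgnf[OF mA], rule mem, simp)
        also have "(\<Sum>j\<le>?L. sgnf j (dd A (l - j - i) (p - int j) (q - int j) (a j)))
           = sgnf ?L (\<Sum>j\<le>?L. sgnf (?L - j) (dd A (?L - j) (p - int j) (q - int j) (a j)))"
        proof -
          have "(\<Sum>j\<le>?L. sgnf j (dd A (l - j - i) (p - int j) (q - int j) (a j)))
             = (\<Sum>j\<le>?L. sgnf (?L + (?L - j)) (dd A (?L - j) (p - int j) (q - int j) (a j)))"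
          proof (rule sum.cong[OF refl])
            fix j assume "j \<in> {..?L}"
            then have e1: "l - j - i = ?L - j" and e2: "even j = even (?L + (?L - j))" using i by auto
            show "sgnf j (dd A (l - j - i) (p - int j) (q - int j) (a j)) = sgnf (?L + (?L - j)) (dd A (?L - j) (p - int j) (q - int j) (a j))"
              unfolding e1 by (rule sgnf_cong[OF e2])
          qed
          then show ?thesis by (simp add: sgnf_sum sgnf_sgnf)
        qed
        also have "(\<Sum>j\<le>?L. sgnf (?L - j) (dd A (?L - j) (p - int j) (q - int j) (a j))) = 0"
          by (rule arel) (use lr in auto)
        finally show "(\<Sum>j\<le>?L. sgnf j (sgnf i (h i (p - int j - int (l - j - i)) (q - int j + 1 - int (l - j - i)) (dd A (l - j - i) (p - int j) (q - int j) (a j))))) = 0"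
          using lin_zero[OF mc_rm[OF mA] hl] by simp
      qed
      finally show ?thesis by simp
    qed
    finally show ?thesis by simp
  qed
  have Tr: "g p q x - f p q x = (\<Sum>i\<le>r. sgnf i (dd B i (PI r i) (QI r i) (b (r - i))))"
    using T[of r] by simp
  have zc: "g p q x - f p q x \<in> car B p q"
    unfolding Tr
  proof (rule car_sum[OF mB], rule car_sgnf[OF mB])
    fix i assume i: "i \<in> {..r}"
    have bri: "b (r - i) \<in> car B (PI r i) (QI r i)" unfolding PI_def QI_def by (rule bc) simp
    show "dd B i (PI r i) (QI r i) (b (r - i)) \<in> car B p q"
      by (rule car_cong[OF mc_car[OF mB bri]]) (use i in \<open>auto simp: PI_def QI_def of_nat_diff\<close>)
  qed
  show ?thesis
  proof (cases "r = 0")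
    case True
    have b0: "b 0 \<in> car B p (q - 1)" using bc[of 0] True by simp
    have "g p q x - f p q x = dd B 0 p (q - 1) (b 0)" using Tr True by (simp add: PI_def QI_def)
    then show ?thesis unfolding Br_def using True zc b0 by auto
  next
    case False
    have c1: "\<forall>i<Suc r. b i \<in> car B (p + int (Suc r) - 1 - int i) (q + int (Suc r) - 2 - int i)"
      using bc by auto
    have c2: "g p q x - f p q x = (\<Sum>i<Suc r. sgnf i (dd B i (p + int (Suc r) - 1 - int (Suc r - 1 - i))
                                        (q + int (Suc r) - 2 - int (Suc r - 1 - i)) (b (Suc r - 1 - i))))"
      unfolding Tr lessThan_Suc_atMost PI_def QI_def by simp
    have c3: "\<forall>l. l + 2 \<le> Suc r \<longrightarrow>
                 (\<Sum>i\<le>l. sgnf i (dd B i (p + int (Suc r) - 1 - int (l - i))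
                                        (q + int (Suc r) - 2 - int (l - i)) (b (l - i)))) = 0"
    proof (intro allI impI)
      fix l assume "l + 2 \<le> Suc r"
      then have "l \<le> r" "l \<noteq> r" by auto
      then show "(\<Sum>i\<le>l. sgnf i (dd B i (p + int (Suc r) - 1 - int (l - i))
                                        (q + int (Suc r) - 2 - int (l - i)) (b (l - i)))) = 0"
        using T[of l] unfolding PI_def QI_def by simp
    qed
    show ?thesis unfolding Br_def using False zc c1 c2 c3 by auto
  qed
qed




lemma morph_Zr:
  assumes mA: "multicomplex nA A" and F: "mc_morphism A B f" and x: "x \<in> Zr A k p q"
  shows "f p q x \<in> Zr B k p q"
proof -
  have fc: "\<And>p q z. z \<in> car A p q \<Longrightarrow> f p q z \<in> car B p q" using F unfolding mc_morphism_def by blast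
  have fl: "\<And>p q. lin_on (smul A) (smul B) (car A p q) (f p q)" using F unfolding mc_morphism_def by blast
  have fd: "\<And>i p q z. z \<in> car A p q \<Longrightarrow> f (p - int i) (q + 1 - int i) (dd A i p q z) = dd B i p q (f p q z)"
    using F unfolding mc_morphism_def by blast
  from x obtain a where a0: "a 0 = x" and xc: "x \<in> car A p q"
    and aj: "\<And>j. 1 \<le> j \<and> j < k \<Longrightarrow> a j \<in> car A (p - int j) (q - int j)"
    and arel: "\<And>l. l < k \<Longrightarrow> (\<Sum>j\<le>l. sgnf (l - j) (dd A (l - j) (p - int j) (q - int j) (a j))) = 0"
    unfolding Zr_def by blast
  have ac: "a j \<in> car A (p - int j) (q - int j)" if "j < k" for j
    using aj[of j] that a0 xc by (cases "j = 0") auto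
  define b where "b j = f (p - int j) (q - int j) (a j)" for j
  show ?thesis unfolding Zr_def
  proof (intro CollectI conjI exI[where x=b] allI impI)
    show "f p q x \<in> car B p q" by (rule fc[OF xc])
    show "b 0 = f p q x" unfolding b_def a0 by simp
  next
    fix j assume "1 \<le> j \<and> j < k" then show "b j \<in> car B (p - int j) (q - int j)"
      unfolding b_def by (intro fc aj)
  next
    fix l assume l: "l < k"
    have mem: "dd A (l - j) (p - int j) (q - int j) (a j) \<in> car A (p - int l) (q + 1 - int l)" if "j \<in> {..l}" for j
      by (rule car_cong[OF mc_car[OF mA ac]]) (use that l in auto)
    have "(\<Sum>j\<le>l. sgnf (l - j) (dd B (l - j) (p - int j) (q - int j) (b j)))
       = (\<Sum>j\<le>l. sgnf (l - j) (f (p - int l) (q + 1 - int l) (dd A (l - j) (p - int j) (q - int j) (a j))))"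
    proof (rule sum.cong[OF refl])
      fix j assume j: "j \<in> {..l}"
      have "dd B (l - j) (p - int j) (q - int j) (b j) = f (p - int j - int (l - j)) (q - int j + 1 - int (l - j)) (dd A (l - j) (p - int j) (q - int j) (a j))"
        unfolding b_def by (rule fd[symmetric], rule ac) (use j l in auto)
      also have "\<dots> = f (p - int l) (q + 1 - int l) (dd A (l - j) (p - int j) (q - int j) (a j))"
        using j by (simp add: of_nat_diff algebra_simps)
      finally show "sgnf (l - j) (dd B (l - j) (p - int j) (q - int j) (b j)) = sgnf (l - j) (f (p - int l) (q + 1 - int l) (dd A (l - j) (p - int j) (q - int j) (a j)))"
        by simp
    qed
    also have "\<dots> = f (p - int l) (q + 1 - int l) (\<Sum>j\<le>l. sgnf (l - j) (dd A (l - j) (p - int j) (q - int j) (a j)))"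
    proof -
      have "f (p - int l) (q + 1 - int l) (\<Sum>j\<le>l. sgnf (l - j) (dd A (l - j) (p - int j) (q - int j) (a j)))
        = (\<Sum>j\<le>l. f (p - int l) (q + 1 - int l) (sgnf (l - j) (dd A (l - j) (p - int j) (q - int j) (a j))))"
        by (rule lin_sum[OF mc_rm[OF mA] fl]) (rule car_sgnf[OF mA], rule mem)
      also have "\<dots> = (\<Sum>j\<le>l. sgnf (l - j) (f (p - int l) (q + 1 - int l) (dd A (l - j) (p - int j) (q - int j) (a j))))"
        by (rule sum.cong[OF refl], rule lin_sgnf[OF mc_rm[OF mA] fl], rule mem)
      finally show ?thesis by simp
    qed
    also have "\<dots> = 0" using arel[OF l] lin_zero[OF mc_rm[OF mA] fl] by simp
    finally show "(\<Sum>j\<le>l. sgnf (l - j) (dd B (l - j) (p - int j) (q - int j) (b j))) = 0" .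
  qed
qed

lemma morph_Br:
  assumes mA: "multicomplex nA A" and F: "mc_morphism A B f" and x: "x \<in> Br A k p q"
  shows "f p q x \<in> Br B k p q"
proof -
  have fc: "\<And>p q z. z \<in> car A p q \<Longrightarrow> f p q z \<in> car B p q" using F unfolding mc_morphism_def by blast
  have fl: "\<And>p q. lin_on (smul A) (smul B) (car A p q) (f p q)" using F unfolding mc_morphism_def by blast
  have fd: "\<And>i p q z. z \<in> car A p q \<Longrightarrow> f (p - int i) (q + 1 - int i) (dd A i p q z) = dd B i p q (f p q z)"
    using F unfolding mc_morphism_def by blast
  note R = mc_rm[OF mA]
  consider "k = 0" | "k = 1" | "k \<ge> 2" by arith
  then show ?thesis
  proof cases
    case 1
    then have "x = 0" using x unfolding Br_def by simp
    then show ?thesis using 1 lin_zero[OF R fl] unfolding Br_def by simp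
  next
    case 2
    then obtain y where xc: "x \<in> car A p q" and yc: "y \<in> car A p (q - 1)" and yx: "dd A 0 p (q - 1) y = x"
      using x unfolding Br_def by auto
    have "dd B 0 p (q - 1) (f p (q - 1) y) = f (p - int 0) (q - 1 + 1 - int 0) (dd A 0 p (q - 1) y)"
      by (rule fd[OF yc, symmetric])
    also have "\<dots> = f p q x" using yx by simp
    finally show ?thesis unfolding Br_def using 2 fc[OF xc] fc[OF yc] by auto
  next
    case 3
    then obtain b where xc: "x \<in> car A p q"
      and bc: "\<forall>i<k. b i \<in> car A (p + int k - 1 - int i) (q + int k - 2 - int i)"
      and xe: "x = (\<Sum>i<k. sgnf i (dd A i (p + int k - 1 - int (k - 1 - i))
                                        (q + int k - 2 - int (k - 1 - i)) (b (k - 1 - i))))"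
      and brel: "\<forall>l. l + 2 \<le> k \<longrightarrow>
                 (\<Sum>i\<le>l. sgnf i (dd A i (p + int k - 1 - int (l - i))
                                        (q + int k - 2 - int (l - i)) (b (l - i)))) = 0"
      using x unfolding Br_def by auto
    define b' where "b' i = f (p + int k - 1 - int i) (q + int k - 2 - int i) (b i)" for i
    have key: "f (p + int k - 1 - int l) (q + int k - 1 - int l) (\<Sum>i\<le>l. sgnf i (dd A i (p + int k - 1 - int (l - i))
                                        (q + int k - 2 - int (l - i)) (b (l - i))))
        = (\<Sum>i\<le>l. sgnf i (dd B i (p + int k - 1 - int (l - i)) (q + int k - 2 - int (l - i)) (b' (l - i))))"
      if lk: "l < k" for l
    proof -
      have mem: "dd A i (p + int k - 1 - int (l - i)) (q + int k - 2 - int (l - i)) (b (l - i)) \<in> car A (p + int k - 1 - int l) (q + int k - 1 - int l)"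
        if "i \<in> {..l}" for i
      proof -
        have "l - i < k" using lk by simp
        then have bi: "b (l - i) \<in> car A (p + int k - 1 - int (l - i)) (q + int k - 2 - int (l - i))" using bc by blast
        show ?thesis by (rule car_cong[OF mc_car[OF mA bi]]) (use that in \<open>auto simp: of_nat_diff\<close>)
      qed
      have "f (p + int k - 1 - int l) (q + int k - 1 - int l) (\<Sum>i\<le>l. sgnf i (dd A i (p + int k - 1 - int (l - i))
                                        (q + int k - 2 - int (l - i)) (b (l - i))))
          = (\<Sum>i\<le>l. f (p + int k - 1 - int l) (q + int k - 1 - int l) (sgnf i (dd A i (p + int k - 1 - int (l - i))
                                        (q + int k - 2 - int (l - i)) (b (l - i)))))"
        by (rule lin_sum[OF R fl]) (rule car_sgnf[OF mA], rule mem)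
      also have "\<dots> = (\<Sum>i\<le>l. sgnf i (dd B i (p + int k - 1 - int (l - i)) (q + int k - 2 - int (l - i)) (b' (l - i))))"
      proof (rule sum.cong[OF refl])
        fix i assume i: "i \<in> {..l}"
        have "l - i < k" using lk by simp
        then have bi: "b (l - i) \<in> car A (p + int k - 1 - int (l - i)) (q + int k - 2 - int (l - i))" using bc by blast
        have "f (p + int k - 1 - int l) (q + int k - 1 - int l) (dd A i (p + int k - 1 - int (l - i)) (q + int k - 2 - int (l - i)) (b (l - i)))
          = f (p + int k - 1 - int (l - i) - int i) (q + int k - 2 - int (l - i) + 1 - int i) (dd A i (p + int k - 1 - int (l - i)) (q + int k - 2 - int (l - i)) (b (l - i)))"
          using i by (simp add: of_nat_diff algebra_simps)
        also have "\<dots> = dd B i (p + int k - 1 - int (l - i)) (q + int k - 2 - int (l - i)) (b' (l - i))"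
          unfolding b'_def by (rule fd[OF bi])
        finally show "f (p + int k - 1 - int l) (q + int k - 1 - int l) (sgnf i (dd A i (p + int k - 1 - int (l - i)) (q + int k - 2 - int (l - i)) (b (l - i))))
          = sgnf i (dd B i (p + int k - 1 - int (l - i)) (q + int k - 2 - int (l - i)) (b' (l - i)))"
          using lin_sgnf[OF R fl mem[OF i]] by simp
      qed
      finally show ?thesis .
    qed
    have c1: "\<forall>i<k. b' i \<in> car B (p + int k - 1 - int i) (q + int k - 2 - int i)"
      unfolding b'_def using bc fc by blast
    have kk: "{..<k} = {..k - 1}" using 3 by auto
    have c2: "f p q x = (\<Sum>i<k. sgnf i (dd B i (p + int k - 1 - int (k - 1 - i))
                                        (q + int k - 2 - int (k - 1 - i)) (b' (k - 1 - i))))"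
    proof -
      have e: "p + int k - 1 - int (k - 1) = p" "q + int k - 1 - int (k - 1) = q" using 3 by auto
      have "f p q x = f (p + int k - 1 - int (k - 1)) (q + int k - 1 - int (k - 1)) x" unfolding e ..
      also have "\<dots> = (\<Sum>i\<le>k - 1. sgnf i (dd B i (p + int k - 1 - int (k - 1 - i)) (q + int k - 2 - int (k - 1 - i)) (b' (k - 1 - i))))"
        unfolding xe kk by (rule key) (use 3 in auto)
      finally show ?thesis unfolding kk .
    qed
    have c3: "\<forall>l. l + 2 \<le> k \<longrightarrow>
                 (\<Sum>i\<le>l. sgnf i (dd B i (p + int k - 1 - int (l - i))
                                        (q + int k - 2 - int (l - i)) (b' (l - i)))) = 0"
    proof (intro allI impI)
      fix l assume l: "l + 2 \<le> k"
      have "(\<Sum>i\<le>l. sgnf i (dd B i (p + int k - 1 - int (l - i)) (q + int k - 2 - int (l - i)) (b' (l - i))))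
        = f (p + int k - 1 - int l) (q + int k - 1 - int l) 0"
        using key[of l] brel l by simp
      then show "(\<Sum>i\<le>l. sgnf i (dd B i (p + int k - 1 - int (l - i)) (q + int k - 2 - int (l - i)) (b' (l - i)))) = 0"
        using lin_zero[OF R fl] by simp
    qed
    show ?thesis unfolding Br_def using 3 fc[OF xc] c1 c2 c3 by auto
  qed
qed

lemma neg_morph: assumes mB: "multicomplex nB B" shows "mc_morphism B B (\<lambda>p q z. - z)"
  unfolding mc_morphism_def
proof (intro conjI allI ballI)
  fix p q z assume "z \<in> car B p q" then show "- z \<in> car B p q" by (rule car_minus[OF mB])
next
  fix p q show "lin_on (smul B) (smul B) (car B p q) (\<lambda>z. - z)"
    unfolding lin_on_def using smul_minus[OF mB] by (auto simp: add.commute)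
next
  fix i p q z assume "z \<in> car B p q"
  then show "- dd B i p q z = dd B i p q (- z)" by (simp add: mc_minus[OF mB])
qed

lemma Br_neg: "multicomplex nB B \<Longrightarrow> z \<in> Br B k p q \<Longrightarrow> - z \<in> Br B k p q"
  using morph_Br[OF _ neg_morph] by blast

lemma iota_Eq:
  assumes n2: "2 \<le> n" and mc: "multicomplex n A"
  shows "Er_quasi_iso r A (Pr r A) iotaA"
  unfolding Er_quasi_iso_def E_iso_def E_surj_def E_inj_def
proof (intro conjI allI ballI impI)
  show "mc_morphism A (Pr r A) iotaA" by (rule iota_morph[OF mc])
next
  fix p q y assume y: "y \<in> Zr (Pr r A) (Suc r) p q"
  have mP: "multicomplex n (Pr r A)" by (rule Pr_multicomplex[OF mc n2])
  have x: "prM p q y \<in> Zr A (Suc r) p q" by (rule morph_Zr[OF mP prM_morph[OF mc] y])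
  have "y - iotaA p q (prM p q y) \<in> Br (Pr r A) (Suc r) p q"
    by (rule hom_Br[OF mP mP Hh_homotopy[OF mc] y])
  then have "- (y - iotaA p q (prM p q y)) \<in> Br (Pr r A) (Suc r) p q" by (rule Br_neg[OF mP])
  then show "\<exists>x\<in>Zr A (Suc r) p q. iotaA p q x - y \<in> Br (Pr r A) (Suc r) p q"
    using x by (intro bexI[of _ "prM p q y"]) simp_all
next
  fix p q x assume x: "x \<in> Zr A (Suc r) p q" and b: "iotaA p q x \<in> Br (Pr r A) (Suc r) p q"
  have mP: "multicomplex n (Pr r A)" by (rule Pr_multicomplex[OF mc n2])
  have "prM p q (iotaA p q x) \<in> Br A (Suc r) p q" by (rule morph_Br[OF mP prM_morph[OF mc] b])
  then show "x \<in> Br A (Suc r) p q" by (simp add: prM_def iotaA_def)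
qed




lemma sum_m1': "(\<Sum>i\<le>(m::nat). if m - i = 1 then f i else 0) = (if 1 \<le> m then f (m - 1) else 0)"
  using sum_m1[where R="\<lambda>_. True" and f=f and m=m] by simp
lemma sum_m0': "(\<Sum>i\<le>(m::nat). if m - i = 0 then f i else 0) = f m"
  using sum_m0[where R="\<lambda>_. True" and f=f and m=m] by simp

lemma sum_shift_if:
  assumes "t \<le> (l::nat)"
  shows "(\<Sum>j\<le>l. if t \<le> j then F (j - t) else 0) = (\<Sum>j\<le>l - t. F j)"
proof -
  have "(\<Sum>j\<le>l. if t \<le> j then F (j - t) else 0) = (\<Sum>j\<in>{j \<in> {..l}. t \<le> j}. F (j - t))"
    by (rule sum.inter_filter[symmetric]) simp
  also have "{j \<in> {..l}. t \<le> j} = {0 + t..(l - t) + t}" using assms by auto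
  also have "(\<Sum>j\<in>{0 + t..(l - t) + t}. F (j - t)) = (\<Sum>j\<in>{0..l - t}. F (j + t - t))"
    by (rule sum.shift_bounds_cl_nat_ivl)
  also have "\<dots> = (\<Sum>j\<le>l - t. F j)" by (simp add: atMost_atLeast0)
  finally show ?thesis .
qed

lemma car_sum_mc[simp]: "car (mc_sum A B) p q = car A p q \<times> car B p q" by (simp add: mc_sum_def)
lemma dd_sum_mc[simp]: "dd (mc_sum A B) i p q z = (dd A i p q (fst z), dd B i p q (snd z))" by (simp add: mc_sum_def)
lemma smul_sum_mc[simp]: "smul (mc_sum A B) c z = (smul A c (fst z), smul B c (snd z))" by (simp add: mc_sum_def)

lemma zero_Br:
  assumes z: "\<And>p q. 0 \<in> car B p q" and d: "\<And>i p q. dd B i p q 0 = 0"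
  shows "0 \<in> Br B k p q"
proof -
  consider "k = 0" | "k = 1" | "k \<ge> 2" by arith
  then show ?thesis
  proof cases
    case 1 then show ?thesis by (simp add: Br_def)
  next
    case 2 then show ?thesis unfolding Br_def using z d by (auto intro!: bexI[where x=0])
  next
    case 3
    have "0 \<in> car B p q \<and> (\<exists>b :: nat \<Rightarrow> _.
              (\<forall>i<k. b i \<in> car B (p + int k - 1 - int i) (q + int k - 2 - int i)) \<and>
              0 = (\<Sum>i<k. sgnf i (dd B i (p + int k - 1 - int (k - 1 - i))
                                        (q + int k - 2 - int (k - 1 - i)) (b (k - 1 - i)))) \<and>
              (\<forall>l. l + 2 \<le> k \<longrightarrow>
                 (\<Sum>i\<le>l. sgnf i (dd B i (p + int k - 1 - int (l - i))
                                        (q + int k - 2 - int (l - i)) (b (l - i)))) = 0))"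
      by (rule conjI[OF z], rule exI[where x="\<lambda>_. 0"]) (simp add: z d)
    then show ?thesis using 3 unfolding Br_def by auto
  qed
qed

context
  fixes n :: enat and A :: "('r::comm_ring_1, 'a::ab_group_add) mcx"
  assumes mc: "multicomplex n A"
begin

lemmas [simp] = car_zero[OF mc] mc_zero[OF mc] smul_zero_vec[OF mc]

lemma piA_morph: "mc_morphism (Pr r A) (mc_sum A A) piA"
  unfolding mc_morphism_def
proof (intro conjI allI ballI)
  fix p q x assume x: "x \<in> car (Pr r A) p q"
  show "piA p q x \<in> car (mc_sum A A) p q"
    using car_Pr_Minus[OF x] car_Pr_Diag[OF x, of 0] by (simp add: piA_def)
next
  fix p q show "lin_on (smul (Pr r A)) (smul (mc_sum A A)) (car (Pr r A) p q) (piA p q)"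
    unfolding lin_on_def by (simp add: piA_def)
next
  fix i p q x assume x: "x \<in> car (Pr r A) p q"
  show "piA (p - int i) (q + 1 - int i) (dd (Pr r A) i p q x) = dd (mc_sum A A) i p q (piA p q x)"
    unfolding dd_Pr[OF mc x] by (simp add: piA_def prd_Diag)
qed

lemma zero_Br_sum: "0 \<in> Br (mc_sum A A) k p q"
  by (rule zero_Br) (simp_all add: zero_prod_def)

lemma lift_Zr:
  assumes kr: "k \<le> r" and y: "y \<in> Zr (mc_sum A A) k p q"
  shows "\<exists>x\<in>Zr (Pr r A) k p q. piA p q x - y \<in> Br (mc_sum A A) k p q"
proof -
  from y obtain c where c0: "c 0 = y" and yc: "y \<in> car A p q \<times> car A p q"
    and cj: "\<And>j. 1 \<le> j \<and> j < k \<Longrightarrow> c j \<in> car A (p - int j) (q - int j) \<times> car A (p - int j) (q - int j)"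
    and crel: "\<And>l. l < k \<Longrightarrow> (\<Sum>j\<le>l. sgnf (l - j) (dd (mc_sum A A) (l - j) (p - int j) (q - int j) (c j))) = 0"
    unfolding Zr_def by auto
  define a where "a j = fst (c j)" for j
  define a' where "a' j = snd (c j)" for j
  define u where "u j = a' j - a j" for j
  have ac: "a j \<in> car A (p - int j) (q - int j)" "a' j \<in> car A (p - int j) (q - int j)" if "j < k" for j
    using cj[of j] that c0 yc by (cases "j = 0"; auto simp: a_def a'_def)+
  have uc: "u j \<in> car A (p - int j) (q - int j)" if "j < k" for j
    unfolding u_def using ac[OF that] by (simp add: car_diff[OF mc])
  have arel: "(\<Sum>j\<le>l. sgnf (l - j) (dd A (l - j) (p - int j) (q - int j) (a j))) = 0"
    and a'rel: "(\<Sum>j\<le>l. sgnf (l - j) (dd A (l - j) (p - int j) (q - int j) (a' j))) = 0" if "l < k" for l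
    using arg_cong[OF crel[OF that], of fst] arg_cong[OF crel[OF that], of snd]
    by (simp_all add: fst_sum snd_sum sgnf_pair a_def a'_def)
  have urel: "(\<Sum>j\<le>l. sgnf (l - j) (dd A (l - j) (p - int j) (q - int j) (u j))) = 0" if l: "l < k" for l
  proof -
    have "(\<Sum>j\<le>l. sgnf (l - j) (dd A (l - j) (p - int j) (q - int j) (u j)))
       = (\<Sum>j\<le>l. sgnf (l - j) (dd A (l - j) (p - int j) (q - int j) (a' j)) - sgnf (l - j) (dd A (l - j) (p - int j) (q - int j) (a j)))"
      by (rule sum.cong[OF refl]) (use l ac in \<open>simp add: u_def mc_diff[OF mc] sgnf_diff\<close>)
    also have "\<dots> = 0" using arel[OF l] a'rel[OF l] by (simp add: sum_subtractf)
    finally show ?thesis .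
  qed
  define X where "X j = (\<lambda>g. case g of LMinus \<Rightarrow> a j
      | LDiag t \<Rightarrow> (if t = 0 then a' j else if t \<le> j \<and> t < r then u (j - t) else 0)
      | _ \<Rightarrow> 0)" for j
  have Xc: "X j \<in> car (Pr r A) (p - int j) (q - int j)" if j: "j < k" for j
    unfolding car_Pr
  proof (intro conjI ballI allI impI)
    fix g assume g: "g \<in> lam_basis r"
    show "X j g \<in> car A (p - int j - fst (lam_deg g)) (q - int j - snd (lam_deg g))"
    proof (cases g)
      case LMinus then show ?thesis using ac[OF j] by (simp add: X_def)
    next
      case (LDiag t)
      show ?thesis
      proof (cases "t = 0")
        case True then show ?thesis using ac[OF j] LDiag by (simp add: X_def)
      next
        case False
        show ?thesis
        proof (cases "t \<le> j \<and> t < r")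
          case True
          have "u (j - t) \<in> car A (p - int (j - t)) (q - int (j - t))" by (rule uc) (use j in auto)
          then show ?thesis using True False LDiag by (simp add: X_def of_nat_diff algebra_simps)
        next
          case nt: False then show ?thesis using False LDiag by (auto simp: X_def)
        qed
      qed
    qed (simp_all add: X_def)
  next
    fix g assume g: "g \<notin> lam_basis r"
    show "X j g = 0" using g by (cases g) (auto simp: X_def)
  qed
  have X0: "X 0 \<in> Zr (Pr r A) k p q"
    unfolding Zr_def
  proof (intro CollectI conjI exI[where x=X] allI impI)
    show "X 0 \<in> car (Pr r A) p q"
    proof (cases "0 < k")
      case True then show ?thesis using Xc[of 0] by simp
    next
      case False
      have "a 0 \<in> car A p q" "a' 0 \<in> car A p q" using yc c0 by (auto simp: a_def a'_def)
      then show ?thesis unfolding car_Pr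
        by (auto simp: X_def split: lbasis.split)
    qed
  next
    show "X 0 = X 0" ..
  next
    fix j assume "1 \<le> j \<and> j < k" then show "X j \<in> car (Pr r A) (p - int j) (q - int j)" using Xc by simp
  next
    fix l assume l: "l < k"
    have Xcl: "X j \<in> car (Pr r A) (p - int j) (q - int j)" if "j \<in> {..l}" for j using Xc that l by simp
    have "(\<Sum>j\<le>l. sgnf (l - j) (dd (Pr r A) (l - j) (p - int j) (q - int j) (X j)))
        = (\<Sum>j\<le>l. sgnf (l - j) (prd r A (l - j) (p - int j) (q - int j) (X j)))"
      by (rule sum.cong[OF refl]) (simp add: dd_Pr[OF mc Xcl])
    also have "\<dots> = 0"
    proof
      fix g
      have ev: "(\<Sum>j\<le>l. sgnf (l - j) (prd r A (l - j) (p - int j) (q - int j) (X j))) g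
          = (\<Sum>j\<le>l. sgnf (l - j) (prd r A (l - j) (p - int j) (q - int j) (X j) g))"
        by (simp add: sum_apply_fun sgnf_fun)
      have "(\<Sum>j\<le>l. sgnf (l - j) (prd r A (l - j) (p - int j) (q - int j) (X j) g)) = 0"
      proof (cases "g \<in> lam_basis r")
        case False then show ?thesis by (simp add: prd_out)
      next
        case b: True
        show ?thesis
        proof (cases g)
          case LMinus then show ?thesis using arel[OF l] by (simp add: X_def)
        next
          case (LDiag t)
          show ?thesis
          proof (cases "t = 0")
            case True then show ?thesis using a'rel[OF l] LDiag by (simp add: X_def prd_Diag)
          next
            case t0: False
            with b LDiag have tr: "t < r" by simp
            have "(\<Sum>j\<le>l. sgnf (l - j) (prd r A (l - j) (p - int j) (q - int j) (X j) g))
              = (\<Sum>j\<le>l. if t \<le> j then sgnf t (sgnf ((l - t) - (j - t)) (dd A ((l - t) - (j - t)) (p - int (j - t)) (q - int (j - t)) (u (j - t)))) else 0)"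
            proof (rule sum.cong[OF refl])
              fix j assume j: "j \<in> {..l}"
              show "sgnf (l - j) (prd r A (l - j) (p - int j) (q - int j) (X j) g) =
                 (if t \<le> j then sgnf t (sgnf ((l - t) - (j - t)) (dd A ((l - t) - (j - t)) (p - int (j - t)) (q - int (j - t)) (u (j - t)))) else 0)"
              proof (cases "t \<le> j")
                case True
                have e: "l - t - (j - t) = l - j" "p - int j + int t = p - int (j - t)" "q - int j + int t = q - int (j - t)"
                  using True j by (auto simp: of_nat_diff)
                have xj: "X j (LDiag t) = u (j - t)" using True t0 tr by (simp add: X_def)
                show ?thesis unfolding LDiag prd_Diag[OF disjI2[OF tr]] xj e(1) e(2) e(3) using True
                  by (simp add: sgnf_sgnf add.commute)
              next
                case False then show ?thesis unfolding LDiag prd_Diag[OF disjI2[OF tr]] using t0 by (simp add: X_def)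
              qed
            qed
            also have "\<dots> = 0"
            proof (cases "t \<le> l")
              case True
              have "(\<Sum>j\<le>l. if t \<le> j then sgnf t (sgnf ((l - t) - (j - t)) (dd A ((l - t) - (j - t)) (p - int (j - t)) (q - int (j - t)) (u (j - t)))) else 0)
                = (\<Sum>j\<le>l - t. sgnf t (sgnf ((l - t) - j) (dd A ((l - t) - j) (p - int j) (q - int j) (u j))))"
                by (rule sum_shift_if[OF True])
              also have "\<dots> = sgnf t (\<Sum>j\<le>l - t. sgnf ((l - t) - j) (dd A ((l - t) - j) (p - int j) (q - int j) (u j)))"
                by (simp add: sgnf_sum)
              also have "\<dots> = 0" using urel[of "l - t"] l by simp
              finally show ?thesis .
            next
              case False
              then show ?thesis by (intro sum.neutral) auto
            qed
            finally show ?thesis .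
          qed
        next
          case (LOff m)
          with b have mr: "m < r" by simp
          define W1 where "W1 j = (if l - j = 1 then - (X j (LDiag m) - (if m = 0 then a j else 0)) else 0)" for j
          define W2 where "W2 j = (if l - j = 0 then (if m + 1 < r then X j (LDiag (m + 1)) else 0) else 0)" for j
          have "(\<Sum>j\<le>l. sgnf (l - j) (prd r A (l - j) (p - int j) (q - int j) (X j) g)) = (\<Sum>j\<le>l. W1 j + W2 j)"
            by (rule sum.cong[OF refl]) (auto simp: LOff prd_Off[OF mr] W1_def W2_def X_def)
          also have "\<dots> = (if 1 \<le> l then - (X (l - 1) (LDiag m) - (if m = 0 then a (l - 1) else 0)) else 0)
                + (if m + 1 < r then X l (LDiag (m + 1)) else 0)"
            unfolding sum.distrib W1_def W2_def sum_m1' sum_m0' ..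
          also have "\<dots> = 0"
          proof (cases "l = 0")
            case True then show ?thesis by (simp add: X_def)
          next
            case False
            have lr: "l < r" using l kr by simp
            show ?thesis
            proof (cases "m = 0")
              case True then show ?thesis using False lr by (simp add: X_def u_def)
            next
              case m0: False
              show ?thesis
              proof (cases "m + 1 \<le> l")
                case True
                have "l - 1 - m = l - (m + 1)" by simp
                moreover have "m \<le> l - 1" using True by simp
                ultimately show ?thesis using True False m0 lr mr by (simp add: X_def)
              next
                case nf: False
                then have "\<not> m \<le> l - 1" using False by arith
                then show ?thesis using False m0 nf by (simp add: X_def)
              qed
            qed
          qed
          finally show ?thesis .
        next
          case L01
          with b have "r = 0" by simp
          then show ?thesis using l kr by simp
        qed
      qed
      then show "(\<Sum>j\<le>l. sgnf (l - j) (prd r A (l - j) (p - int j) (q - int j) (X j))) g = 0 g"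
        using ev by simp
    qed
    finally show "(\<Sum>j\<le>l. sgnf (l - j) (dd (Pr r A) (l - j) (p - int j) (q - int j) (X j))) = 0" .
  qed
  have "piA p q (X 0) - y = 0"
    using c0 by (simp add: piA_def X_def a_def a'_def)
  then show ?thesis using X0 zero_Br_sum by (intro bexI[of _ "X 0"]) simp_all
qed

lemma piA_fib: "r_fibration r (Pr r A) (mc_sum A A) piA"
  unfolding r_fibration_def E_surj_def
  using piA_morph lift_Zr by blast

end

theorem mainTheorem14:
  fixes n :: enat and r :: nat and A :: "('r::comm_ring_1, 'a::ab_group_add) mcx"
  assumes "2 \<le> n" and "multicomplex n A"
  shows "multicomplex n (Pr r A)
    \<and> r_homotopy_equivalence r A (Pr r A) iotaA
    \<and> Er_quasi_iso r A (Pr r A) iotaA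
    \<and> r_fibration r (Pr r A) (mc_sum A A) piA
    \<and> (\<forall>p q. \<forall>a\<in>car A p q. piA p q (iotaA p q a) = diagA p q a)"
proof (intro conjI allI ballI)
  show "multicomplex n (Pr r A)" by (rule Pr_multicomplex[OF assms(2) assms(1)])
  show "r_homotopy_equivalence r A (Pr r A) iotaA" by (rule iota_heq[OF assms(2)])
  show "Er_quasi_iso r A (Pr r A) iotaA" by (rule iota_Eq[OF assms(1) assms(2)])
  show "r_fibration r (Pr r A) (mc_sum A A) piA" by (rule piA_fib[OF assms(2)])
  fix p q a show "piA p q (iotaA p q a) = diagA p q a" by (simp add: piA_def iotaA_def diagA_def)
qed

end
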